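(* The algebra $(\mathcal{T}_\bullet,\hat{\ast})$ is a free associative algebra, freely generated by the set of non-empty reduced set compositions in $\mathsf{Comp}=\bigcup_{n\ge0}\mathsf{Comp}_n$.
   Context: $[n]=\{1,\ldots,n\}$. A set composition of a finite set $S\subset\mathbb{N}$ is a tuple $(P_1,\ldots,P_k)$ of pairwise disjoint non-empty subsets with union $S$; $\mathsf{Comp}_n$ is the set of set compositions of $[n]$ ($\mathsf{Comp}_0=\{\text{empty tuple}\}$). $\mathcal{T}_n$ is the free $\mathbb{Z}$-module on $\mathsf{Comp}_n$, $\mathcal{T}_\bullet=\bigoplus_{n\ge0}\mathcal{T}_n$. For finite $S,T\subset\mathbb{N}$ with $|S|=|T|$, $\mathsf{is}_{S,T}$ maps a set composition of $S$ to one of $T$ by applying the order-preserving bijection $S\to T$ blockwise. For set compositions $P$ of $S$ and $Q$ of $T$ with $S\cap T=\emptyset$, $P\ast Q$ is the concatenated tuple. The symmetrized product is defined bilinearly, for $P\in\mathsf{Comp}_p$, $Q\in\mathsf{Comp}_q$, by $P\,\hat{\ast}\,Q=\sum\mathsf{is}_{[p],A}(P)\ast\mathsf{is}_{[q],B}(Q)$, summed over all ordered pairs $(A,B)$ with $A\sqcup B=[p+q]$, $|A|=p$, $|B|=q$; its unit is the empty tuple. A set composition $(P_1,\ldots,P_k)\in\mathsf{Comp}_n$ is reduced if there is no $(a,m)$ with $1\le a<k$, $m<n$ and $P_1\cup\cdots\cup P_a=[m]$. *)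

theory Defs
  imports Main
begin

definition is_setcomp :: "nat set \<Rightarrow> nat set list \<Rightarrow> bool" where
  "is_setcomp S P \<longleftrightarrow>
     (\<forall>B\<in>set P. B \<noteq> {}) \<and>
     (\<forall>i<length P. \<forall>j<length P. i \<noteq> j \<longrightarrow> P ! i \<inter> P ! j = {}) \<and>
     \<Union>(set P) = S"

definition Comp :: "nat \<Rightarrow> nat set list set" where
  "Comp n = {P. is_setcomp {1..n} P}"

text \<open>Order-preserving bijection S -> T (for finite S, T of equal cardinality), applied blockwise.\<close>
definition ordmap :: "nat set \<Rightarrow> nat set \<Rightarrow> nat \<Rightarrow> nat" where
  "ordmap S T x = sorted_list_of_set T ! card {y\<in>S. y < x}"

definition is_map :: "nat set \<Rightarrow> nat set \<Rightarrow> nat set list \<Rightarrow> nat set list" where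
  "is_map S T P = map (\<lambda>B. ordmap S T ` B) P"

text \<open>Elements of T_bullet: finitely supported integer-valued functions on set compositions.\<close>
definition supp :: "('a \<Rightarrow> int) \<Rightarrow> 'a set" where
  "supp f = {x. f x \<noteq> 0}"

definition Tmod :: "(nat set list \<Rightarrow> int) set" where
  "Tmod = {f. finite (supp f) \<and> (\<forall>P. f P \<noteq> 0 \<longrightarrow> (\<exists>n. P \<in> Comp n))}"

definition basis :: "nat set list \<Rightarrow> nat set list \<Rightarrow> int" where
  "basis P = (\<lambda>R. if R = P then 1 else 0)"

text \<open>Symmetrized product of basis elements P in Comp_p, Q in Comp_q: the coefficient of R is
  the number of subsets A of [p+q] with |A| = p (B = [p+q] - A) producing R.\<close>
definition shp :: "nat set list \<Rightarrow> nat set list \<Rightarrow> nat set list \<Rightarrow> int" where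
  "shp P Q = (let p = card (\<Union>(set P)); q = card (\<Union>(set Q)) in
     (\<lambda>R. int (card {A. A \<subseteq> {1..p+q} \<and> card A = p \<and>
        R = is_map {1..p} A P @ is_map {1..q} ({1..p+q} - A) Q})))"

definition sprod :: "(nat set list \<Rightarrow> int) \<Rightarrow> (nat set list \<Rightarrow> int) \<Rightarrow> nat set list \<Rightarrow> int" where
  "sprod f g = (\<lambda>R. \<Sum>P\<in>supp f. \<Sum>Q\<in>supp g. f P * g Q * shp P Q R)"

definition sunit :: "nat set list \<Rightarrow> int" where
  "sunit = basis []"

definition reduced :: "nat \<Rightarrow> nat set list \<Rightarrow> bool" where
  "reduced n P \<longleftrightarrow> P \<in> Comp n \<and>
     \<not> (\<exists>a m. 1 \<le> a \<and> a < length P \<and> m < n \<and> \<Union>(set (take a P)) = {1..m})"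

definition Gens :: "nat set list set" where
  "Gens = {P. \<exists>n. P \<noteq> [] \<and> reduced n P}"

text \<open>Free associative algebra Z<Gens>: finitely supported integer functions on words over Gens.\<close>
definition Words :: "(nat set list list \<Rightarrow> int) set" where
  "Words = {c. finite (supp c) \<and> (\<forall>w. c w \<noteq> 0 \<longrightarrow> set w \<subseteq> Gens)}"

definition wprod :: "nat set list list \<Rightarrow> nat set list \<Rightarrow> int" where
  "wprod w = foldr sprod (map basis w) sunit"

definition Phi :: "(nat set list list \<Rightarrow> int) \<Rightarrow> nat set list \<Rightarrow> int" where
  "Phi c = (\<lambda>R. \<Sum>w\<in>supp c. c w * wprod w R)"

end

theory Submission
  imports Defs
begin


lemma slos_card:
  assumes "finite T" "t \<in> T"
  shows "sorted_list_of_set T ! card {z\<in>T. z<t} = (t::nat)"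
proof -
  let ?xs = "sorted_list_of_set T"
  have ss: "sorted_wrt (<) ?xs" by (simp add: strict_sorted_list_of_set)
  have st: "set ?xs = T" using assms by simp
  have dis: "distinct ?xs" by simp
  obtain i where i: "i < length ?xs" "?xs ! i = t" by (metis in_set_conv_nth st assms(2))
  have "{z\<in>T. z<t} = set (take i ?xs)"
  proof (intro set_eqI iffI)
    fix z assume "z \<in> {z\<in>T. z<t}"
    then obtain j where j: "j < length ?xs" "?xs ! j = z" "z < t" by (metis (mono_tags, lifting) in_set_conv_nth mem_Collect_eq st)
    have "j < i"
    proof (rule ccontr)
      assume "\<not> j < i"
      then have "i \<le> j" by simp
      then have "?xs ! i \<le> ?xs ! j" using ss j i
        by (metis order_le_less sorted_wrt_nth_less)
      then show False using i j by simp
    qed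
    then show "z \<in> set (take i ?xs)" using j i by (metis in_set_conv_nth length_take min_less_iff_conj nth_take)
  next
    fix z assume "z \<in> set (take i ?xs)"
    then obtain j where j: "j < i" "?xs ! j = z" using i by (auto simp: in_set_conv_nth)
    then have "z < t" using ss i by (metis sorted_wrt_nth_less)
    moreover have "z \<in> T" using j i st by (metis nth_mem order.strict_trans)
    ultimately show "z \<in> {z\<in>T. z<t}" by simp
  qed
  then have "card {z\<in>T. z<t} = i" using dis i by (simp add: distinct_card)
  then show ?thesis using i by simp
qed

lemma ordmap_mono:
  assumes "finite S" "finite T" "card S = card T"
  shows "strict_mono_on S (ordmap S T)" "ordmap S T ` S = T"
proof -
  let ?xs = "sorted_list_of_set T"
  let ?c = "\<lambda>x. card {y\<in>S. y < x}"
  have ss: "sorted_wrt (<) ?xs" by (simp add: strict_sorted_list_of_set)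
  have len: "length ?xs = card S" using assms by simp
  have clt: "?c x < card S" if "x \<in> S" for x
    using assms(1) that by (intro psubset_card_mono) auto
  have cmono: "?c x < ?c y" if "x \<in> S" "y \<in> S" "x < y" for x y
    using assms(1) that by (intro psubset_card_mono) auto
  show sm: "strict_mono_on S (ordmap S T)"
  proof (rule strict_mono_onI)
    fix x y assume "x \<in> S" "y \<in> S" "x < y"
    then show "ordmap S T x < ordmap S T y"
    proof -
      have "?c x < ?c y" "?c y < length ?xs" using cmono clt len \<open>x \<in> S\<close> \<open>y \<in> S\<close> \<open>x < y\<close> by auto
      then have "?xs ! ?c x < ?xs ! ?c y" using ss sorted_wrt_nth_less by blast
      then show ?thesis unfolding ordmap_def .
    qed
  qed
  have sub: "ordmap S T ` S \<subseteq> T"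
  proof
    fix z assume "z \<in> ordmap S T ` S"
    then obtain x where x: "x \<in> S" "z = ?xs ! ?c x" unfolding ordmap_def by auto
    then have "z \<in> set ?xs" using clt len by simp
    then show "z \<in> T" using assms by simp
  qed
  have "card (ordmap S T ` S) = card S"
    using card_image strict_mono_on_imp_inj_on[OF sm] by blast
  then show "ordmap S T ` S = T" using card_subset_eq[OF assms(2) sub] assms(3) by simp
qed

lemma ordmap_unique:
  assumes "finite S" "strict_mono_on S f" "f ` S = T" "x \<in> S"
  shows "ordmap S T x = (f x :: nat)"
proof -
  have inj: "inj_on f S" using assms(2) by (rule strict_mono_on_imp_inj_on)
  have "f ` {y\<in>S. y < x} = {z\<in>T. z < f x}"
  proof (intro set_eqI iffI)
    fix z assume "z \<in> f ` {y\<in>S. y < x}"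
    then obtain y where "y \<in> S" "y < x" "z = f y" by auto
    then show "z \<in> {z\<in>T. z < f x}" using assms strict_mono_onD[OF assms(2)] by auto
  next
    fix z assume "z \<in> {z\<in>T. z < f x}"
    then obtain y where y: "y \<in> S" "z = f y" "f y < f x" using assms(3) by auto
    then have "y < x" using strict_mono_on_less[OF assms(2) y(1) assms(4)] by simp
    then show "z \<in> f ` {y\<in>S. y < x}" using y by auto
  qed
  then have "card {z\<in>T. z < f x} = card {y\<in>S. y < x}"
    by (metis (no_types, lifting) inj card_image inj_on_subset mem_Collect_eq subsetI)
  moreover have "f x \<in> T" using assms by auto
  moreover have "finite T" using assms by auto
  ultimately show ?thesis unfolding ordmap_def by (metis slos_card)
qed

abbreviation uni :: "nat set list \<Rightarrow> nat set" where "uni X \<equiv> \<Union>(set X)"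

definition std :: "nat set list \<Rightarrow> nat set list" where
  "std X = is_map (uni X) {1..card (uni X)} X"

definition shift :: "nat \<Rightarrow> nat set list \<Rightarrow> nat set list" where
  "shift m X = map (image ((+) m)) X"

lemma uni_map: "uni (map (image f) X) = f ` uni X"
  by auto

lemma std_alt: "std X = map (image (ordmap (uni X) {1..card (uni X)})) X"
  unfolding std_def is_map_def by simp

lemma std_sm:
  assumes "finite (uni X)"
  shows "strict_mono_on (uni X) (ordmap (uni X) {1..card (uni X)})"
    "ordmap (uni X) {1..card (uni X)} ` uni X = {1..card (uni X)}"
  using ordmap_mono[OF assms, of "{1..card (uni X)}"] by auto

lemma uni_std: "finite (uni X) \<Longrightarrow> uni (std X) = {1..card (uni X)}"
  unfolding std_alt uni_map using std_sm by simp

lemma card_uni_std: "finite (uni X) \<Longrightarrow> card (uni (std X)) = card (uni X)"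
  using uni_std by simp

lemma finite_uni_std: "finite (uni X) \<Longrightarrow> finite (uni (std X))"
  using uni_std by simp

lemma length_std[simp]: "length (std X) = length X"
  by (simp add: std_alt)

lemma std_Nil[simp]: "std [] = []"
  by (simp add: std_alt)

lemma std_map:
  assumes "finite (uni X)" "strict_mono_on (uni X) f"
  shows "std (map (image f) X) = std X"
proof -
  let ?U = "uni X" let ?k = "card ?U"
  have u: "uni (map (image f) X) = f ` ?U" by (rule uni_map)
  have inj: "inj_on f ?U" using assms(2) by (rule strict_mono_on_imp_inj_on)
  have ck: "card (f ` ?U) = ?k" using inj by (simp add: card_image)
  have fin: "finite (f ` ?U)" using assms by simp
  have sm1: "strict_mono_on (f ` ?U) (ordmap (f ` ?U) {1..?k})"
    and im1: "ordmap (f ` ?U) {1..?k} ` (f ` ?U) = {1..?k}"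
    using ordmap_mono[OF fin, of "{1..?k}"] ck by auto
  have smc: "strict_mono_on ?U (ordmap (f ` ?U) {1..?k} \<circ> f)"
  proof (rule strict_mono_onI)
    fix r s assume "r \<in> ?U" "s \<in> ?U" "r < s"
    then show "(ordmap (f ` ?U) {1..?k} \<circ> f) r < (ordmap (f ` ?U) {1..?k} \<circ> f) s"
      using strict_mono_onD[OF assms(2)] strict_mono_onD[OF sm1] by auto
  qed
  have eq: "ordmap ?U {1..?k} x = ordmap (f ` ?U) {1..?k} (f x)" if "x \<in> ?U" for x
    using ordmap_unique[OF assms(1) smc _ that] im1 by (simp add: image_comp)
  show ?thesis unfolding std_alt u ck map_map o_def
  proof (rule map_cong[OF refl])
    fix B assume "B \<in> set X"
    then have "B \<subseteq> ?U" by auto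
    then show "ordmap (f ` ?U) {1..?k} ` f ` B = ordmap ?U {1..?k} ` B"
      unfolding image_comp using eq by (intro image_cong) (auto simp del: Union_iff, metis subsetD)
  qed
qed

lemma ordmap_id: "finite S \<Longrightarrow> x \<in> S \<Longrightarrow> ordmap S S x = x"
  using ordmap_unique[of S "\<lambda>x. x" S x] by (simp add: strict_mono_on_ident)

lemma std_id:
  assumes "uni X = {1..k}"
  shows "std X = X"
proof -
  have "card (uni X) = k" using assms by simp
  then have "std X = map (image (ordmap (uni X) (uni X))) X" unfolding std_alt using assms by simp
  also have "\<dots> = map (image id) X"
  proof (rule map_cong[OF refl])
    fix B assume "B \<in> set X"
    then have "B \<subseteq> uni X" by auto
    then show "ordmap (uni X) (uni X) ` B = id ` B"
      using ordmap_id[of "uni X"] assms by (intro image_cong) (auto simp del: Union_iff)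
  qed
  finally show ?thesis by simp
qed

lemma std_std: "finite (uni X) \<Longrightarrow> std (std X) = std X"
  using std_id uni_std by blast

lemma uni_take_sub: "uni (take a X) \<subseteq> uni X"
  by (meson Union_mono set_take_subset)

lemma uni_drop_sub: "uni (drop a X) \<subseteq> uni X"
  by (meson Union_mono set_drop_subset)

lemma std_take:
  assumes "finite (uni X)"
  shows "std (take a (std X)) = std (take a X)"
proof -
  have "take a (std X) = map (image (ordmap (uni X) {1..card (uni X)})) (take a X)"
    unfolding std_alt by (simp add: take_map)
  moreover have "strict_mono_on (uni (take a X)) (ordmap (uni X) {1..card (uni X)})"
    using std_sm(1)[OF assms] uni_take_sub by (rule monotone_on_subset)
  moreover have "finite (uni (take a X))" by (rule finite_subset[OF uni_take_sub assms])
  ultimately show ?thesis using std_map by simp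
qed

lemma std_drop:
  assumes "finite (uni X)"
  shows "std (drop a (std X)) = std (drop a X)"
proof -
  have "drop a (std X) = map (image (ordmap (uni X) {1..card (uni X)})) (drop a X)"
    unfolding std_alt by (simp add: drop_map)
  moreover have "strict_mono_on (uni (drop a X)) (ordmap (uni X) {1..card (uni X)})"
    using std_sm(1)[OF assms] uni_drop_sub by (rule monotone_on_subset)
  moreover have "finite (uni (drop a X))" by (rule finite_subset[OF uni_drop_sub assms])
  ultimately show ?thesis using std_map by simp
qed

lemma std_inv:
  assumes "finite (uni X)"
  shows "X = map (image (ordmap {1..card (uni X)} (uni X))) (std X)"
proof -
  let ?U = "uni X" let ?k = "card ?U"
  let ?g = "ordmap ?U {1..?k}" let ?h = "ordmap {1..?k} ?U"
  have sg: "strict_mono_on ?U ?g" and ig: "?g ` ?U = {1..?k}" using std_sm[OF assms] by auto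
  have sh: "strict_mono_on {1..?k} ?h" and ih: "?h ` {1..?k} = ?U"
    using ordmap_mono[of "{1..?k}" ?U] assms by auto
  have shg: "strict_mono_on ?U (?h \<circ> ?g)"
  proof (rule strict_mono_onI)
    fix r s assume "r \<in> ?U" "s \<in> ?U" "r < s"
    moreover have "?g r \<in> {1..?k}" "?g s \<in> {1..?k}" using ig \<open>r \<in> ?U\<close> \<open>s \<in> ?U\<close> by (blast, blast)
    ultimately show "(?h \<circ> ?g) r < (?h \<circ> ?g) s"
      using strict_mono_onD[OF sg] strict_mono_onD[OF sh] by (simp del: Union_iff)
  qed
  have ihg: "(?h \<circ> ?g) ` ?U = ?U" using ig ih by (metis image_comp)
  have hg: "?h (?g x) = x" if "x \<in> ?U" for x
    using ordmap_unique[OF assms shg ihg that] ordmap_id[OF assms that] by simp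
  show ?thesis unfolding std_alt map_map o_def
  proof (rule map_idI[symmetric])
    fix B assume "B \<in> set X"
    then have "B \<subseteq> ?U" by auto
    then have "(?h \<circ> ?g) ` B = id ` B" using hg by (intro image_cong) (auto simp del: Union_iff)
    then show "?h ` ?g ` B = B" unfolding image_comp by simp
  qed
qed

lemma std_eq:
  assumes "finite (uni X)" "uni X = uni Y" "std X = std Y"
  shows "X = Y"
proof -
  have f2: "finite (uni Y)" using assms by simp
  have "X = map (image (ordmap {1..card (uni X)} (uni X))) (std X)" by (rule std_inv[OF assms(1)])
  moreover have "Y = map (image (ordmap {1..card (uni Y)} (uni Y))) (std Y)" by (rule std_inv[OF f2])
  ultimately show ?thesis using assms by simp
qed

lemma uni_shift: "uni (shift m X) = (+) m ` uni X"
  unfolding shift_def by auto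

lemma std_shift: "finite (uni X) \<Longrightarrow> std (shift m X) = std X"
  unfolding shift_def by (rule std_map) (auto intro: strict_mono_onI)

lemma shift_std:
  assumes "uni Y = {m+1..m+k}"
  shows "Y = shift m (std Y)"
proof -
  have fin: "finite (uni Y)" using assms by simp
  have ck: "card (uni Y) = k" using assms by simp
  have "ordmap {1..k} (uni Y) x = m + x" if "x \<in> {1..k}" for x
  proof (rule ordmap_unique)
    show "strict_mono_on {1..k} ((+) m)" by (auto intro: strict_mono_onI)
    show "(+) m ` {1..k} = uni Y" using assms by (simp add: image_add_atLeastAtMost)
  qed (use that in auto)
  then have e: "ordmap {1..k} (uni Y) ` B = (+) m ` B" if "B \<subseteq> {1..k}" for B
    using that by (intro image_cong) auto
  have "\<forall>B\<in>set (std Y). B \<subseteq> {1..k}" using uni_std[OF fin] ck by auto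
  then have m1: "map (image (ordmap {1..k} (uni Y))) (std Y) = map (image ((+) m)) (std Y)"
    using e by (intro map_cong) auto
  have m2: "Y = map (image (ordmap {1..k} (uni Y))) (std Y)" using std_inv[OF fin] ck by simp
  show ?thesis unfolding shift_def using m2 m1 by (rule trans)
qed

definition pd :: "nat set list \<Rightarrow> bool" where
  "pd X \<longleftrightarrow> (\<forall>i<length X. \<forall>j<length X. i \<noteq> j \<longrightarrow> X ! i \<inter> X ! j = {})"

definition sc :: "nat set list \<Rightarrow> bool" where
  "sc X \<longleftrightarrow> (\<forall>B\<in>set X. B \<noteq> {}) \<and> pd X"

lemma Comp_iff: "X \<in> Comp n \<longleftrightarrow> sc X \<and> uni X = {1..n}"
  unfolding Comp_def is_setcomp_def sc_def pd_def by auto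

lemma pd_Nil[simp]: "pd []"
  unfolding pd_def by simp

lemma pd_Cons: "pd (B # X) \<longleftrightarrow> B \<inter> uni X = {} \<and> pd X"
proof
  assume h: "pd (B # X)"
  have "B \<inter> X ! j = {}" if "j < length X" for j
    using h that unfolding pd_def by (metis Suc_less_eq length_Cons nat.distinct(1) nth_Cons_0 nth_Cons_Suc zero_less_Suc)
  then have "B \<inter> uni X = {}" by (auto simp: in_set_conv_nth) blast
  moreover have "pd X" unfolding pd_def
  proof (intro allI impI)
    fix i j assume "i < length X" "j < length X" "i \<noteq> j"
    then show "X ! i \<inter> X ! j = {}" using h unfolding pd_def
      by (metis Suc_less_eq length_Cons nat.inject nth_Cons_Suc)
  qed
  ultimately show "B \<inter> uni X = {} \<and> pd X" by simp
next
  assume h: "B \<inter> uni X = {} \<and> pd X"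
  show "pd (B # X)" unfolding pd_def
  proof (intro allI impI)
    fix i j assume ij: "i < length (B # X)" "j < length (B # X)" "i \<noteq> j"
    show "(B # X) ! i \<inter> (B # X) ! j = {}"
    proof (cases i)
      case 0
      then obtain j' where "j = Suc j'" "j' < length X" using ij by (cases j) auto
      then show ?thesis using h 0 by (auto dest: nth_mem)
    next
      case (Suc i')
      then have i': "i' < length X" using ij by simp
      show ?thesis
      proof (cases j)
        case 0
        then show ?thesis using h Suc i' by (auto dest: nth_mem)
      next
        case (Suc j')
        then show ?thesis using h \<open>i = Suc i'\<close> ij unfolding pd_def by auto
      qed
    qed
  qed
qed

lemma pd_append: "pd (X @ Y) \<longleftrightarrow> pd X \<and> pd Y \<and> uni X \<inter> uni Y = {}"
  by (induction X) (auto simp: pd_Cons)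

lemma sc_Nil[simp]: "sc []"
  unfolding sc_def by simp

lemma sc_Cons: "sc (B # X) \<longleftrightarrow> B \<noteq> {} \<and> B \<inter> uni X = {} \<and> sc X"
  unfolding sc_def pd_Cons by auto

lemma sc_append: "sc (X @ Y) \<longleftrightarrow> sc X \<and> sc Y \<and> uni X \<inter> uni Y = {}"
  unfolding sc_def pd_append by auto

lemma sc_map:
  assumes "inj_on f (uni X)" "sc X"
  shows "sc (map (image f) X)"
  using assms
proof (induction X)
  case Nil
  then show ?case by simp
next
  case (Cons B X)
  have i1: "inj_on f (uni X)" using Cons.prems(1) by (rule inj_on_subset) auto
  have "f ` B \<inter> f ` uni X = f ` (B \<inter> uni X)"
    using Cons.prems(1) by (intro inj_on_image_Int[symmetric]) auto
  then show ?case using Cons i1 by (auto simp: sc_Cons simp del: Union_iff)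
qed

lemma sc_take_drop:
  assumes "sc X"
  shows "sc (take a X)" "sc (drop a X)" "uni (take a X) \<inter> uni (drop a X) = {}"
  using assms sc_append[of "take a X" "drop a X"] by auto

lemma uni_take_drop: "uni (take a X) \<union> uni (drop a X) = uni X"
  by (metis Union_Un_distrib append_take_drop_id set_append)

lemma Comp_finite: "X \<in> Comp n \<Longrightarrow> finite (uni X)"
  unfolding Comp_iff by simp

lemma Comp_card: "X \<in> Comp n \<Longrightarrow> card (uni X) = n"
  unfolding Comp_iff by simp

lemma Comp_std: "X \<in> Comp n \<Longrightarrow> std X = X"
  unfolding Comp_iff using std_id by blast

lemma sc_std:
  assumes "finite (uni X)" "sc X"
  shows "std X \<in> Comp (card (uni X))"
  unfolding Comp_iff
proof
  show "sc (std X)" unfolding std_alt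
    using sc_map[OF strict_mono_on_imp_inj_on[OF std_sm(1)[OF assms(1)]] assms(2)] .
  show "uni (std X) = {1..card (uni X)}" using uni_std[OF assms(1)] .
qed

lemma Comp_split_card:
  assumes "T \<in> Comp N"
  shows "card (uni (take a T)) + card (uni (drop a T)) = N"
proof -
  have f: "finite (uni T)" using assms by (rule Comp_finite)
  have f1: "finite (uni (take a T))" by (rule finite_subset[OF uni_take_sub f])
  have f2: "finite (uni (drop a T))" by (rule finite_subset[OF uni_drop_sub f])
  have d: "uni (take a T) \<inter> uni (drop a T) = {}" using assms unfolding Comp_iff using sc_take_drop by blast
  have "card (uni T) = card (uni (take a T)) + card (uni (drop a T))"
    using card_Un_disjoint[OF f1 f2 d] uni_take_drop[of a T] by simp
  then show ?thesis using Comp_card[OF assms] by simp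
qed

lemma Comp_take_std:
  assumes "T \<in> Comp N"
  shows "std (take a T) \<in> Comp (card (uni (take a T)))" "std (drop a T) \<in> Comp (card (uni (drop a T)))"
proof -
  have f: "finite (uni T)" using assms by (rule Comp_finite)
  have s: "sc T" using assms Comp_iff by blast
  show "std (take a T) \<in> Comp (card (uni (take a T)))"
    by (rule sc_std[OF finite_subset[OF uni_take_sub f] sc_take_drop(1)[OF s]])
  show "std (drop a T) \<in> Comp (card (uni (drop a T)))"
    by (rule sc_std[OF finite_subset[OF uni_drop_sub f] sc_take_drop(2)[OF s]])
qed

definition good :: "nat set list \<Rightarrow> nat set list \<Rightarrow> nat set list \<Rightarrow> bool" where
  "good P Q R \<longleftrightarrow> (\<exists>N. R \<in> Comp N) \<and> length R = length P + length Q
     \<and> std (take (length P) R) = P \<and> std (drop (length P) R) = Q"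

lemma ism:
  assumes "P \<in> Comp p" "finite A" "card A = p"
  shows "uni (is_map {1..p} A P) = A" "std (is_map {1..p} A P) = P"
    "length (is_map {1..p} A P) = length P" "sc (is_map {1..p} A P)"
proof -
  have sm: "strict_mono_on {1..p} (ordmap {1..p} A)" and im: "ordmap {1..p} A ` {1..p} = A"
    using ordmap_mono[of "{1..p}" A] assms by auto
  have u: "uni P = {1..p}" using assms Comp_iff by blast
  show "uni (is_map {1..p} A P) = A" unfolding is_map_def uni_map u im ..
  show "std (is_map {1..p} A P) = P" unfolding is_map_def
    using std_map[of P "ordmap {1..p} A"] sm u Comp_std[OF assms(1)] by simp
  show "length (is_map {1..p} A P) = length P" by (simp add: is_map_def)
  show "sc (is_map {1..p} A P)" unfolding is_map_def
    using sc_map[of "ordmap {1..p} A" P] strict_mono_on_imp_inj_on[OF sm] u assms Comp_iff by auto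
qed

lemma shp_good:
  assumes P: "P \<in> Comp p" and Q: "Q \<in> Comp q"
  shows "shp P Q R = (if good P Q R then 1 else 0)"
proof -
  have cp: "card (uni P) = p" using Comp_card[OF P] .
  have cq: "card (uni Q) = q" using Comp_card[OF Q] .
  define SA where "SA = {A. A \<subseteq> {1..p+q} \<and> card A = p \<and>
        R = is_map {1..p} A P @ is_map {1..q} ({1..p+q} - A) Q}"
  have shp: "shp P Q R = int (card SA)" unfolding shp_def SA_def Let_def cp cq by simp
  have one: "good P Q R \<and> A = uni (take (length P) R)" if "A \<in> SA" for A
  proof -
    let ?B = "{1..p+q} - A"
    let ?X = "is_map {1..p} A P" let ?Y = "is_map {1..q} ?B Q"
    have A: "A \<subseteq> {1..p+q}" "card A = p" "R = ?X @ ?Y" using that SA_def by auto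
    have fA: "finite A" using A(1) finite_subset by blast
    have cB: "card ?B = q" using A(1,2) by (simp add: card_Diff_subset fA)
    have fB: "finite ?B" by simp
    note x = ism[OF P fA A(2)] and y = ism[OF Q fB cB]
    have tk: "take (length P) R = ?X" "drop (length P) R = ?Y" using A(3) x(3) by auto
    have "sc R" using A(3) x(4) y(4) x(1) y(1) sc_append by auto
    moreover have "uni R = {1..p+q}" using A(3) x(1) y(1) A(1) by auto
    ultimately have "R \<in> Comp (p+q)" using Comp_iff by blast
    moreover have "length R = length P + length Q" using A(3) x(3) y(3) by simp
    ultimately show ?thesis unfolding good_def using tk x y by auto
  qed
  have two: "uni (take (length P) R) \<in> SA" if g: "good P Q R"
  proof -
    obtain N where RN: "R \<in> Comp N" using g good_def by blast
    let ?X = "take (length P) R" let ?Y = "drop (length P) R"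
    have sX: "std ?X = P" and sY: "std ?Y = Q" using g good_def by auto
    have fR: "finite (uni R)" using Comp_finite[OF RN] .
    have fX: "finite (uni ?X)" by (rule finite_subset[OF uni_take_sub fR])
    have fY: "finite (uni ?Y)" by (rule finite_subset[OF uni_drop_sub fR])
    have cX: "card (uni ?X) = p" using card_uni_std[OF fX] sX cp by simp
    have cY: "card (uni ?Y) = q" using card_uni_std[OF fY] sY cq by simp
    have N: "N = p + q" using Comp_split_card[OF RN, of "length P"] cX cY by simp
    have uR: "uni R = {1..p+q}" using RN N Comp_iff by blast
    have dj: "uni ?X \<inter> uni ?Y = {}" using RN Comp_iff sc_take_drop by blast
    have uY: "uni ?Y = {1..p+q} - uni ?X" using uni_take_drop[of "length P" R] uR dj by blast
    have eX: "?X = is_map {1..p} (uni ?X) P" using std_inv[OF fX] cX sX unfolding is_map_def by simp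
    have eY: "?Y = is_map {1..q} ({1..p+q} - uni ?X) Q" using std_inv[OF fY] cY sY uY unfolding is_map_def by simp
    have "R = ?X @ ?Y" by simp
    then have "R = is_map {1..p} (uni ?X) P @ is_map {1..q} ({1..p+q} - uni ?X) Q" using eX eY by simp
    moreover have "uni ?X \<subseteq> {1..p+q}" using uni_take_drop[of "length P" R] uR by blast
    ultimately show ?thesis unfolding SA_def using cX by blast
  qed
  show ?thesis
  proof (cases "good P Q R")
    case True
    then have "SA = {uni (take (length P) R)}" using one two by blast
    then show ?thesis using True shp by simp
  next
    case False
    then have "SA = {}" using one by blast
    then show ?thesis using False shp by simp
  qed
qed

lemma Comp_finite_take: "T \<in> Comp N \<Longrightarrow> finite (uni (take a T))"
  by (rule finite_subset[OF uni_take_sub Comp_finite])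

lemma Comp_finite_drop: "T \<in> Comp N \<Longrightarrow> finite (uni (drop a T))"
  by (rule finite_subset[OF uni_drop_sub Comp_finite])

lemma shp_supp_finite: "finite (supp (shp P Q))"
proof -
  let ?p = "card (uni P)" let ?q = "card (uni Q)"
  let ?F = "\<lambda>A. is_map {1..?p} A P @ is_map {1..?p+?q} ({1..?p+?q} - A) Q"
  let ?G = "\<lambda>A. is_map {1..?p} A P @ is_map {1..?q} ({1..?p+?q} - A) Q"
  have "supp (shp P Q) \<subseteq> ?G ` Pow {1..?p+?q}"
  proof
    fix R assume "R \<in> supp (shp P Q)"
    then have "card {A. A \<subseteq> {1..?p+?q} \<and> card A = ?p \<and> R = ?G A} \<noteq> 0"
      unfolding supp_def shp_def Let_def by simp
    then obtain A where "A \<subseteq> {1..?p+?q}" "R = ?G A"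
      by (metis (mono_tags, lifting) card.empty empty_Collect_eq)
    then show "R \<in> ?G ` Pow {1..?p+?q}" by blast
  qed
  then show ?thesis by (rule finite_subset) simp
qed

lemma good_Comp: "good P Q R \<Longrightarrow> \<exists>N. R \<in> Comp N"
  unfolding good_def by blast

lemma Tmod_D: "f \<in> Tmod \<Longrightarrow> finite (supp f)" "f \<in> Tmod \<Longrightarrow> P \<in> supp f \<Longrightarrow> \<exists>n. P \<in> Comp n"
  unfolding Tmod_def supp_def by auto

lemma sprod_alt:
  assumes "finite F" "finite G" "supp f \<subseteq> F" "supp g \<subseteq> G"
  shows "sprod f g R = (\<Sum>P\<in>F. \<Sum>Q\<in>G. f P * g Q * shp P Q R)"
proof -
  have "sprod f g R = (\<Sum>P\<in>supp f. \<Sum>Q\<in>G. f P * g Q * shp P Q R)"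
    unfolding sprod_def
  proof (rule sum.cong[OF refl])
    fix P show "(\<Sum>Q\<in>supp g. f P * g Q * shp P Q R) = (\<Sum>Q\<in>G. f P * g Q * shp P Q R)"
      by (rule sum.mono_neutral_left[OF assms(2) assms(4)]) (auto simp: supp_def)
  qed
  also have "\<dots> = (\<Sum>P\<in>F. \<Sum>Q\<in>G. f P * g Q * shp P Q R)"
    by (rule sum.mono_neutral_left[OF assms(1) assms(3)]) (auto simp: supp_def)
  finally show ?thesis .
qed

lemma supp_basis[simp]: "supp (basis P) = {P}"
  unfolding supp_def basis_def by auto

lemma basis_Tmod: "P \<in> Comp n \<Longrightarrow> basis P \<in> Tmod"
  unfolding Tmod_def supp_def basis_def by auto

lemma Comp0: "[] \<in> Comp 0"
  unfolding Comp_iff by simp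

lemma sunit_Tmod: "sunit \<in> Tmod"
  unfolding sunit_def using basis_Tmod[OF Comp0] .

lemma shp_Comp:
  assumes "P \<in> Comp p" "Q \<in> Comp q" "shp P Q R \<noteq> 0"
  shows "good P Q R"
  using shp_good[OF assms(1,2)] assms(3) by (auto split: if_splits)

lemma sprod_Tmod:
  assumes f: "f \<in> Tmod" and g: "g \<in> Tmod"
  shows "sprod f g \<in> Tmod"
proof -
  let ?RR = "\<Union>P\<in>supp f. \<Union>Q\<in>supp g. supp (shp P Q)"
  have fin: "finite ?RR" using Tmod_D(1)[OF f] Tmod_D(1)[OF g] shp_supp_finite by auto
  have sub: "supp (sprod f g) \<subseteq> ?RR \<inter> {R. \<exists>N. R \<in> Comp N}"
  proof
    fix R assume "R \<in> supp (sprod f g)"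
    then have "(\<Sum>P\<in>supp f. \<Sum>Q\<in>supp g. f P * g Q * shp P Q R) \<noteq> 0"
      unfolding supp_def sprod_def by simp
    then obtain P where P: "P \<in> supp f" "(\<Sum>Q\<in>supp g. f P * g Q * shp P Q R) \<noteq> 0"
      using sum.not_neutral_contains_not_neutral by blast
    then obtain Q where Q: "Q \<in> supp g" "f P * g Q * shp P Q R \<noteq> 0"
      using sum.not_neutral_contains_not_neutral by blast
    have "shp P Q R \<noteq> 0" using Q by auto
    moreover obtain p q where "P \<in> Comp p" "Q \<in> Comp q" using Tmod_D(2) f g P Q by blast
    ultimately have "good P Q R" "R \<in> supp (shp P Q)" using shp_Comp unfolding supp_def by auto
    then show "R \<in> ?RR \<inter> {R. \<exists>N. R \<in> Comp N}" using P Q good_Comp by blast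
  qed
  then show ?thesis unfolding Tmod_def using finite_subset[OF _ fin]
    by (auto simp: supp_def)
qed

lemma good_unit_left:
  assumes "Q \<in> Comp q"
  shows "good [] Q R \<longleftrightarrow> R = Q"
proof
  assume "good [] Q R"
  then obtain N where "R \<in> Comp N" "std R = Q" unfolding good_def by auto
  then show "R = Q" using Comp_std by auto
next
  assume "R = Q"
  then show "good [] Q R" unfolding good_def using assms Comp_std by auto
qed

lemma good_unit_right:
  assumes "P \<in> Comp p"
  shows "good P [] R \<longleftrightarrow> R = P"
proof
  assume "good P [] R"
  then obtain N where "R \<in> Comp N" "std R = P" "length R = length P" unfolding good_def by auto
  then show "R = P" using Comp_std by auto
next
  assume "R = P"
  then show "good P [] R" unfolding good_def using assms Comp_std by auto
qed

lemma sprod_unit_left: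
  assumes f: "f \<in> Tmod"
  shows "sprod sunit f = f"
proof
  fix R
  have "sprod sunit f R = (\<Sum>Q\<in>supp f. f Q * shp [] Q R)"
    unfolding sprod_def sunit_def supp_basis by (simp add: basis_def)
  also have "\<dots> = (\<Sum>Q\<in>supp f. if Q = R then f R else 0)"
  proof (rule sum.cong[OF refl])
    fix Q assume "Q \<in> supp f"
    then obtain q where "Q \<in> Comp q" using Tmod_D(2)[OF f] by blast
    then show "f Q * shp [] Q R = (if Q = R then f R else 0)"
      using shp_good[OF Comp0 \<open>Q \<in> Comp q\<close>] good_unit_left[OF \<open>Q \<in> Comp q\<close>] by auto
  qed
  also have "\<dots> = f R" using Tmod_D(1)[OF f] by (simp add: supp_def)
  finally show "sprod sunit f R = f R" .
qed

lemma sprod_unit_right: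
  assumes f: "f \<in> Tmod"
  shows "sprod f sunit = f"
proof
  fix R
  have "sprod f sunit R = (\<Sum>P\<in>supp f. f P * shp P [] R)"
    unfolding sprod_def sunit_def supp_basis by (simp add: basis_def)
  also have "\<dots> = (\<Sum>P\<in>supp f. if P = R then f R else 0)"
  proof (rule sum.cong[OF refl])
    fix P assume "P \<in> supp f"
    then obtain p where "P \<in> Comp p" using Tmod_D(2)[OF f] by blast
    then show "f P * shp P [] R = (if P = R then f R else 0)"
      using shp_good[OF \<open>P \<in> Comp p\<close> Comp0] good_unit_right[OF \<open>P \<in> Comp p\<close>] by auto
  qed
  also have "\<dots> = f R" using Tmod_D(1)[OF f] by (simp add: supp_def)
  finally show "sprod f sunit R = f R" .
qed

definition G3 :: "nat set list \<Rightarrow> nat set list \<Rightarrow> nat set list \<Rightarrow> nat set list \<Rightarrow> bool" where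
  "G3 P Q S T \<longleftrightarrow> (\<exists>N. T \<in> Comp N) \<and> length T = length P + length Q + length S
     \<and> std (take (length P) T) = P \<and> std (take (length Q) (drop (length P) T)) = Q
     \<and> std (drop (length P + length Q) T) = S"

lemma L3a:
  assumes "good P Q R" "good R S T"
  shows "R = std (take (length P + length Q) T) \<and> G3 P Q S T"
proof -
  from assms(1) have R: "length R = length P + length Q" "std (take (length P) R) = P"
    "std (drop (length P) R) = Q" unfolding good_def by auto
  from assms(2) obtain N where T: "T \<in> Comp N" "length T = length R + length S"
    "std (take (length R) T) = R" "std (drop (length R) T) = S" unfolding good_def by auto
  have fT: "finite (uni (take (length R) T))" using Comp_finite_take[OF T(1)] .
  have "std (take (length P) T) = std (take (length P) (take (length R) T))"
    using R(1) by (simp add: min_def)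
  also have "\<dots> = std (take (length P) R)" using std_take[OF fT] T(3) by simp
  finally have 1: "std (take (length P) T) = P" using R(2) by simp
  have "std (take (length Q) (drop (length P) T)) = std (drop (length P) (take (length R) T))"
    using R(1) by (simp add: drop_take)
  also have "\<dots> = std (drop (length P) R)" using std_drop[OF fT] T(3) by simp
  finally have 2: "std (take (length Q) (drop (length P) T)) = Q" using R(3) by simp
  show ?thesis using T R 1 2 unfolding G3_def by auto
qed

lemma L3b:
  assumes "G3 P Q S T"
  defines "R0 \<equiv> std (take (length P + length Q) T)"
  shows "good P Q R0 \<and> good R0 S T"
proof -
  from assms obtain N where T: "T \<in> Comp N" "length T = length P + length Q + length S"
    "std (take (length P) T) = P" "std (take (length Q) (drop (length P) T)) = Q"
    "std (drop (length P + length Q) T) = S" unfolding G3_def by auto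
  have fT: "finite (uni (take (length P + length Q) T))" using Comp_finite_take[OF T(1)] .
  have c: "R0 \<in> Comp (card (uni (take (length P + length Q) T)))" unfolding R0_def using Comp_take_std(1)[OF T(1)] .
  have l: "length R0 = length P + length Q" unfolding R0_def using T(2) by simp
  have 1: "std (take (length P) R0) = P" unfolding R0_def using std_take[OF fT] T(3) by (simp add: min_def)
  have 2: "std (drop (length P) R0) = Q" unfolding R0_def using std_drop[OF fT] T(4) by (simp add: drop_take)
  have "good P Q R0" unfolding good_def using c l 1 2 by auto
  moreover have "good R0 S T" unfolding good_def using T l R0_def by auto
  ultimately show ?thesis by simp
qed

lemma L3c:
  assumes "good Q S R" "good P R T"
  shows "R = std (drop (length P) T) \<and> G3 P Q S T"
proof -
  from assms(1) have R: "length R = length Q + length S" "std (take (length Q) R) = Q"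
    "std (drop (length Q) R) = S" unfolding good_def by auto
  from assms(2) obtain N where T: "T \<in> Comp N" "length T = length P + length R"
    "std (take (length P) T) = P" "std (drop (length P) T) = R" unfolding good_def by auto
  have fT: "finite (uni (drop (length P) T))" using Comp_finite_drop[OF T(1)] .
  have 1: "std (take (length Q) (drop (length P) T)) = Q" using std_take[OF fT] T(4) R(2) by simp
  have 2: "std (drop (length P + length Q) T) = S" using std_drop[OF fT] T(4) R(3) by (simp add: add.commute)
  show ?thesis using T R 1 2 unfolding G3_def by auto
qed

lemma L3d:
  assumes "G3 P Q S T"
  defines "R1 \<equiv> std (drop (length P) T)"
  shows "good Q S R1 \<and> good P R1 T"
proof -
  from assms obtain N where T: "T \<in> Comp N" "length T = length P + length Q + length S"
    "std (take (length P) T) = P" "std (take (length Q) (drop (length P) T)) = Q"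
    "std (drop (length P + length Q) T) = S" unfolding G3_def by auto
  have fT: "finite (uni (drop (length P) T))" using Comp_finite_drop[OF T(1)] .
  have c: "R1 \<in> Comp (card (uni (drop (length P) T)))" unfolding R1_def using Comp_take_std(2)[OF T(1)] .
  have l: "length R1 = length Q + length S" unfolding R1_def using T(2) by simp
  have 1: "std (take (length Q) R1) = Q" unfolding R1_def using std_take[OF fT] T(4) by simp
  have 2: "std (drop (length Q) R1) = S" unfolding R1_def using std_drop[OF fT] T(5) by (simp add: add.commute)
  have "good Q S R1" unfolding good_def using c l 1 2 by auto
  moreover have "good P R1 T" unfolding good_def using T l R1_def by auto
  ultimately show ?thesis by simp
qed

lemma sum_single:
  assumes "finite RR" "\<And>R. R \<in> RR \<Longrightarrow> k R = (if R = Rz then c else 0)" "c \<noteq> 0 \<Longrightarrow> Rz \<in> RR"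
  shows "(\<Sum>R\<in>RR. k R) = (c::int)"
proof -
  have "(\<Sum>R\<in>RR. k R) = (\<Sum>R\<in>RR. if R = Rz then c else 0)" using assms(2) by (rule sum.cong[OF refl])
  also have "\<dots> = (if Rz \<in> RR then c else 0)" using assms(1) by simp
  also have "\<dots> = c" using assms(3) by auto
  finally show ?thesis .
qed

lemma trip1:
  assumes P: "P \<in> Comp p" and Q: "Q \<in> Comp q" and S: "S \<in> Comp s"
    and RR: "finite RR" "supp (shp P Q) \<subseteq> RR"
  shows "(\<Sum>R\<in>RR. shp P Q R * shp R S T) = (if G3 P Q S T then 1 else 0)"
proof (rule sum_single[OF RR(1), where Rz = "std (take (length P + length Q) T)"])
  fix R
  show "shp P Q R * shp R S T = (if R = std (take (length P + length Q) T) then (if G3 P Q S T then 1 else 0) else 0)"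
  proof (cases "good P Q R")
    case True
    then obtain N where RN: "R \<in> Comp N" using good_Comp by blast
    have e1: "shp P Q R = 1" using shp_good[OF P Q, of R] True by simp
    show ?thesis
    proof (cases "good R S T")
      case True2: True
      then have "R = std (take (length P + length Q) T)" "G3 P Q S T" using L3a[OF True True2] by auto
      then show ?thesis using e1 shp_good[OF RN S, of T] True2 by simp
    next
      case False2: False
      have "\<not> (R = std (take (length P + length Q) T) \<and> G3 P Q S T)"
      proof
        assume "R = std (take (length P + length Q) T) \<and> G3 P Q S T"
        then show False using L3b[of P Q S T] False2 by auto
      qed
      then show ?thesis using e1 shp_good[OF RN S, of T] False2 by auto
    qed
  next
    case False
    have "\<not> (R = std (take (length P + length Q) T) \<and> G3 P Q S T)"
    proof
      assume "R = std (take (length P + length Q) T) \<and> G3 P Q S T"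
      then show False using L3b[of P Q S T] False by auto
    qed
    then show ?thesis using shp_good[OF P Q, of R] False by auto
  qed
next
  assume "(if G3 P Q S T then 1 else 0) \<noteq> (0::int)"
  then have "G3 P Q S T" by (auto split: if_splits)
  then have "good P Q (std (take (length P + length Q) T))" using L3b by blast
  then have "std (take (length P + length Q) T) \<in> supp (shp P Q)" using shp_good[OF P Q] by (simp add: supp_def)
  then show "std (take (length P + length Q) T) \<in> RR" using RR(2) by blast
qed

lemma trip2:
  assumes P: "P \<in> Comp p" and Q: "Q \<in> Comp q" and S: "S \<in> Comp s"
    and RR: "finite RR" "supp (shp Q S) \<subseteq> RR"
  shows "(\<Sum>R\<in>RR. shp Q S R * shp P R T) = (if G3 P Q S T then 1 else 0)"
proof (rule sum_single[OF RR(1), where Rz = "std (drop (length P) T)"])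
  fix R
  show "shp Q S R * shp P R T = (if R = std (drop (length P) T) then (if G3 P Q S T then 1 else 0) else 0)"
  proof (cases "good Q S R")
    case True
    then obtain N where RN: "R \<in> Comp N" using good_Comp by blast
    have e1: "shp Q S R = 1" using shp_good[OF Q S, of R] True by simp
    show ?thesis
    proof (cases "good P R T")
      case True2: True
      then have "R = std (drop (length P) T)" "G3 P Q S T" using L3c[OF True True2] by auto
      then show ?thesis using e1 shp_good[OF P RN, of T] True2 by simp
    next
      case False2: False
      have "\<not> (R = std (drop (length P) T) \<and> G3 P Q S T)"
      proof
        assume "R = std (drop (length P) T) \<and> G3 P Q S T"
        then show False using L3d[of P Q S T] False2 by auto
      qed
      then show ?thesis using e1 shp_good[OF P RN, of T] False2 by auto
    qed
  next
    case False
    have "\<not> (R = std (drop (length P) T) \<and> G3 P Q S T)"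
    proof
      assume "R = std (drop (length P) T) \<and> G3 P Q S T"
      then show False using L3d[of P Q S T] False by auto
    qed
    then show ?thesis using shp_good[OF Q S, of R] False by auto
  qed
next
  assume "(if G3 P Q S T then 1 else 0) \<noteq> (0::int)"
  then have "G3 P Q S T" by (auto split: if_splits)
  then have "good Q S (std (drop (length P) T))" using L3d by blast
  then have "std (drop (length P) T) \<in> supp (shp Q S)" using shp_good[OF Q S] by (simp add: supp_def)
  then show "std (drop (length P) T) \<in> RR" using RR(2) by blast
qed

lemma swap4:
  "(\<Sum>R\<in>A. \<Sum>S\<in>B. \<Sum>P\<in>C. \<Sum>Q\<in>D. k R S P Q) = (\<Sum>P\<in>C. \<Sum>Q\<in>D. \<Sum>S\<in>B. \<Sum>R\<in>A. (k R S P Q :: int))"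
proof -
  have "(\<Sum>R\<in>A. \<Sum>S\<in>B. \<Sum>P\<in>C. \<Sum>Q\<in>D. k R S P Q) = (\<Sum>S\<in>B. \<Sum>R\<in>A. \<Sum>P\<in>C. \<Sum>Q\<in>D. k R S P Q)"
    by (rule sum.swap)
  also have "\<dots> = (\<Sum>S\<in>B. \<Sum>P\<in>C. \<Sum>R\<in>A. \<Sum>Q\<in>D. k R S P Q)"
    by (rule sum.cong[OF refl], rule sum.swap)
  also have "\<dots> = (\<Sum>S\<in>B. \<Sum>P\<in>C. \<Sum>Q\<in>D. \<Sum>R\<in>A. k R S P Q)"
    by (rule sum.cong[OF refl], rule sum.cong[OF refl], rule sum.swap)
  also have "\<dots> = (\<Sum>P\<in>C. \<Sum>S\<in>B. \<Sum>Q\<in>D. \<Sum>R\<in>A. k R S P Q)"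
    by (rule sum.swap)
  also have "\<dots> = (\<Sum>P\<in>C. \<Sum>Q\<in>D. \<Sum>S\<in>B. \<Sum>R\<in>A. k R S P Q)"
    by (rule sum.cong[OF refl], rule sum.swap)
  finally show ?thesis .
qed

lemma swap4b:
  "(\<Sum>P\<in>C. \<Sum>R\<in>A. \<Sum>Q\<in>D. \<Sum>S\<in>B. k R S P Q) = (\<Sum>P\<in>C. \<Sum>Q\<in>D. \<Sum>S\<in>B. \<Sum>R\<in>A. (k R S P Q :: int))"
proof (rule sum.cong[OF refl])
  fix P
  have "(\<Sum>R\<in>A. \<Sum>Q\<in>D. \<Sum>S\<in>B. k R S P Q) = (\<Sum>Q\<in>D. \<Sum>R\<in>A. \<Sum>S\<in>B. k R S P Q)"
    by (rule sum.swap)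
  also have "\<dots> = (\<Sum>Q\<in>D. \<Sum>S\<in>B. \<Sum>R\<in>A. k R S P Q)"
    by (rule sum.cong[OF refl], rule sum.swap)
  finally show "(\<Sum>R\<in>A. \<Sum>Q\<in>D. \<Sum>S\<in>B. k R S P Q) = (\<Sum>Q\<in>D. \<Sum>S\<in>B. \<Sum>R\<in>A. k R S P Q)" .
qed

lemma supp_sprod_sub:
  "supp (sprod f g) \<subseteq> (\<Union>P\<in>supp f. \<Union>Q\<in>supp g. supp (shp P Q))"
proof
  fix R assume "R \<in> supp (sprod f g)"
  then have "(\<Sum>P\<in>supp f. \<Sum>Q\<in>supp g. f P * g Q * shp P Q R) \<noteq> 0"
    unfolding supp_def sprod_def by simp
  then obtain P where P: "P \<in> supp f" "(\<Sum>Q\<in>supp g. f P * g Q * shp P Q R) \<noteq> 0"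
    using sum.not_neutral_contains_not_neutral by blast
  then obtain Q where Q: "Q \<in> supp g" "f P * g Q * shp P Q R \<noteq> 0"
    using sum.not_neutral_contains_not_neutral by blast
  then show "R \<in> (\<Union>P\<in>supp f. \<Union>Q\<in>supp g. supp (shp P Q))" using P by (auto simp: supp_def)
qed

lemma sprod_assoc:
  assumes f: "f \<in> Tmod" and g: "g \<in> Tmod" and h: "h \<in> Tmod"
  shows "sprod (sprod f g) h = sprod f (sprod g h)"
proof
  fix T
  let ?F = "supp f" let ?G = "supp g" let ?H = "supp h"
  let ?RR1 = "\<Union>P\<in>?F. \<Union>Q\<in>?G. supp (shp P Q)"
  let ?RR2 = "\<Union>Q\<in>?G. \<Union>S\<in>?H. supp (shp Q S)"
  have fF: "finite ?F" and fG: "finite ?G" and fH: "finite ?H" using f g h Tmod_D(1) by auto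
  have fR1: "finite ?RR1" using fF fG shp_supp_finite by auto
  have fR2: "finite ?RR2" using fG fH shp_supp_finite by auto
  let ?c = "\<lambda>P Q S. if G3 P Q S T then 1 else (0::int)"
  have "sprod (sprod f g) h T = (\<Sum>R\<in>?RR1. \<Sum>S\<in>?H. sprod f g R * h S * shp R S T)"
    by (rule sprod_alt[OF fR1 fH supp_sprod_sub subset_refl])
  also have "\<dots> = (\<Sum>R\<in>?RR1. \<Sum>S\<in>?H. (\<Sum>P\<in>?F. \<Sum>Q\<in>?G. f P * g Q * shp P Q R) * h S * shp R S T)"
    using sprod_alt[OF fF fG subset_refl subset_refl] by simp
  also have "\<dots> = (\<Sum>R\<in>?RR1. \<Sum>S\<in>?H. \<Sum>P\<in>?F. \<Sum>Q\<in>?G. f P * g Q * h S * (shp P Q R * shp R S T))"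
    by (simp only: sum_distrib_right) (simp add: mult_ac)
  also have "\<dots> = (\<Sum>P\<in>?F. \<Sum>Q\<in>?G. \<Sum>S\<in>?H. \<Sum>R\<in>?RR1. f P * g Q * h S * (shp P Q R * shp R S T))"
    by (rule swap4)
  also have "\<dots> = (\<Sum>P\<in>?F. \<Sum>Q\<in>?G. \<Sum>S\<in>?H. f P * g Q * h S * ?c P Q S)"
  proof (intro sum.cong[OF refl])
    fix P Q S assume "P \<in> ?F" "Q \<in> ?G" "S \<in> ?H"
    then obtain p q s where C: "P \<in> Comp p" "Q \<in> Comp q" "S \<in> Comp s" using f g h Tmod_D(2) by meson
    have sub: "supp (shp P Q) \<subseteq> ?RR1" using \<open>P \<in> ?F\<close> \<open>Q \<in> ?G\<close> by blast
    show "(\<Sum>R\<in>?RR1. f P * g Q * h S * (shp P Q R * shp R S T)) = f P * g Q * h S * ?c P Q S"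
      using trip1[OF C fR1 sub, of T] by (simp add: sum_distrib_left[symmetric])
  qed
  finally have L: "sprod (sprod f g) h T = (\<Sum>P\<in>?F. \<Sum>Q\<in>?G. \<Sum>S\<in>?H. f P * g Q * h S * ?c P Q S)" .
  have "sprod f (sprod g h) T = (\<Sum>P\<in>?F. \<Sum>R\<in>?RR2. f P * sprod g h R * shp P R T)"
    by (rule sprod_alt[OF fF fR2 subset_refl supp_sprod_sub])
  also have "\<dots> = (\<Sum>P\<in>?F. \<Sum>R\<in>?RR2. f P * (\<Sum>Q\<in>?G. \<Sum>S\<in>?H. g Q * h S * shp Q S R) * shp P R T)"
    using sprod_alt[OF fG fH subset_refl subset_refl] by simp
  also have "\<dots> = (\<Sum>P\<in>?F. \<Sum>R\<in>?RR2. \<Sum>Q\<in>?G. \<Sum>S\<in>?H. f P * g Q * h S * (shp Q S R * shp P R T))"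
    by (simp only: sum_distrib_left sum_distrib_right) (simp add: mult_ac)
  also have "\<dots> = (\<Sum>P\<in>?F. \<Sum>Q\<in>?G. \<Sum>S\<in>?H. \<Sum>R\<in>?RR2. f P * g Q * h S * (shp Q S R * shp P R T))"
    by (rule swap4b)
  also have "\<dots> = (\<Sum>P\<in>?F. \<Sum>Q\<in>?G. \<Sum>S\<in>?H. f P * g Q * h S * ?c P Q S)"
  proof (intro sum.cong[OF refl])
    fix P Q S assume "P \<in> ?F" "Q \<in> ?G" "S \<in> ?H"
    then obtain p q s where C: "P \<in> Comp p" "Q \<in> Comp q" "S \<in> Comp s" using f g h Tmod_D(2) by meson
    have sub: "supp (shp Q S) \<subseteq> ?RR2" using \<open>Q \<in> ?G\<close> \<open>S \<in> ?H\<close> by blast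
    show "(\<Sum>R\<in>?RR2. f P * g Q * h S * (shp Q S R * shp P R T)) = f P * g Q * h S * ?c P Q S"
      using trip2[OF C fR2 sub, of T] by (simp add: sum_distrib_left[symmetric])
  qed
  finally show "sprod (sprod f g) h T = sprod f (sprod g h) T" using L by simp
qed



definition cutat :: "nat set list \<Rightarrow> nat \<Rightarrow> bool" where
  "cutat X a \<longleftrightarrow> (\<forall>x\<in>uni (take a X). \<forall>y\<in>uni (drop a X). x < y)"

definition cuts :: "nat set list \<Rightarrow> nat set" where
  "cuts X = {a. 0 < a \<and> a < length X \<and> cutat X a}"

lemma cuts_finite[simp]: "finite (cuts X)"
  by (rule finite_subset[of _ "{..<length X}"]) (auto simp: cuts_def)

lemma cut_map:
  assumes "strict_mono_on (uni X) f"
  shows "cutat (map (image f) X) a \<longleftrightarrow> cutat X a"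
proof -
  have t: "uni (take a (map (image f) X)) = f ` uni (take a X)" by (simp only: take_map uni_map)
  have d: "uni (drop a (map (image f) X)) = f ` uni (drop a X)" by (simp only: drop_map uni_map)
  have "x < y \<longleftrightarrow> f x < f y" if "x \<in> uni (take a X)" "y \<in> uni (drop a X)" for x y
    using strict_mono_on_less[OF assms] that uni_take_sub uni_drop_sub by (metis subsetD)
  then show ?thesis unfolding cutat_def t d by auto
qed

lemma cuts_map:
  assumes "strict_mono_on (uni X) f"
  shows "cuts (map (image f) X) = cuts X"
  unfolding cuts_def using cut_map[OF assms] by simp

lemma cuts_std: "finite (uni X) \<Longrightarrow> cuts (std X) = cuts X"
  unfolding std_alt by (rule cuts_map[OF std_sm(1)])

lemma cuts_shift: "cuts (shift m X) = cuts X"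
  unfolding shift_def by (rule cuts_map) (auto intro: strict_mono_onI)

lemma cuts_append_sub:
  "cuts (X @ Y) \<subseteq> cuts X \<union> {length X} \<union> (\<lambda>b. length X + b) ` cuts Y"
proof
  fix a assume a: "a \<in> cuts (X @ Y)"
  then have a1: "0 < a" "a < length X + length Y" and c: "cutat (X @ Y) a" unfolding cuts_def by auto
  consider "a < length X" | "a = length X" | "a > length X" by linarith
  then show "a \<in> cuts X \<union> {length X} \<union> (\<lambda>b. length X + b) ` cuts Y"
  proof cases
    case 1
    have "uni (drop a X) \<subseteq> uni (drop a (X @ Y))" using 1 by auto
    then have "cutat X a" using c 1 unfolding cutat_def by auto
    then show ?thesis using 1 a1 unfolding cuts_def by auto
  next
    case 2 then show ?thesis by simp
  next
    case 3
    let ?b = "a - length X"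
    have "uni (take ?b Y) \<subseteq> uni (take a (X @ Y))" using 3 by auto
    moreover have "drop a (X @ Y) = drop ?b Y" using 3 by simp
    ultimately have "cutat Y ?b" using c unfolding cutat_def by auto
    then have "?b \<in> cuts Y" using 3 a1 unfolding cuts_def by auto
    then show ?thesis using 3 by (auto intro: image_eqI[of _ _ ?b])
  qed
qed

lemma cut_append_at:
  assumes "\<forall>x\<in>uni X. \<forall>y\<in>uni Y. x < y"
  shows "cutat (X @ Y) (length X)"
  using assms unfolding cutat_def by simp

lemma cut_append_shift:
  assumes "\<forall>x\<in>uni X. \<forall>y\<in>uni Y. x < y" "cutat Y b"
  shows "cutat (X @ Y) (length X + b)"
proof -
  have t: "take (length X + b) (X @ Y) = X @ take b Y" by simp
  have d: "drop (length X + b) (X @ Y) = drop b Y" by simp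
  show ?thesis unfolding cutat_def t d
  proof (intro ballI)
    fix x y assume x: "x \<in> uni (X @ take b Y)" and y: "y \<in> uni (drop b Y)"
    then show "x < y" using assms uni_drop_sub[of b Y] unfolding cutat_def by auto
  qed
qed

lemma Comp_uni: "X \<in> Comp n \<Longrightarrow> uni X = {1..n}"
  unfolding Comp_iff by simp

lemma Comp_sc: "X \<in> Comp n \<Longrightarrow> sc X"
  unfolding Comp_iff by simp

lemma Comp_un: "X \<in> Comp n \<Longrightarrow> uni (take a X) \<union> uni (drop a X) = {1..n}"
  using uni_take_drop[of a X] Comp_uni[of X n] by simp

lemma Comp_dj: "X \<in> Comp n \<Longrightarrow> uni (take a X) \<inter> uni (drop a X) = {}"
  using sc_take_drop(3)[OF Comp_sc] by simp

lemma cut_Comp: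
  assumes "P \<in> Comp n" "a < length P"
  shows "cutat P a \<longleftrightarrow> (\<exists>m<n. uni (take a P) = {1..m})"
proof -
  let ?A = "uni (take a P)" let ?D = "uni (drop a P)"
  have un: "?A \<union> ?D = {1..n}" by (rule Comp_un[OF assms(1)])
  have dj: "?A \<inter> ?D = {}" by (rule Comp_dj[OF assms(1)])
  have ne: "?D \<noteq> {}"
  proof -
    have "P ! a \<in> set (drop a P)" using assms(2) by (metis Cons_nth_drop_Suc list.set_intros(1))
    moreover have "P ! a \<noteq> {}" using Comp_sc[OF assms(1)] nth_mem[OF assms(2)] unfolding sc_def by blast
    ultimately show ?thesis by blast
  qed
  have fD: "finite ?D" by (rule finite_subset[of _ "{1..n}"]) (use un in auto)
  show ?thesis
  proof
    assume c: "cutat P a"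
    let ?y = "Min ?D"
    have y: "?y \<in> ?D" using Min_in[OF fD ne] .
    have yn: "?y \<le> n" "1 \<le> ?y" using y un by auto
    have "?A = {1..?y - 1}"
    proof (intro set_eqI iffI)
      fix x assume x: "x \<in> ?A"
      then have "x < ?y" using c y unfolding cutat_def by blast
      moreover have "1 \<le> x" using x un by auto
      ultimately show "x \<in> {1..?y - 1}" by simp
    next
      fix x assume x: "x \<in> {1..?y - 1}"
      then have "x \<in> {1..n}" using yn by auto
      moreover have "x \<notin> ?D"
      proof
        assume "x \<in> ?D"
        then have "?y \<le> x" by (rule Min_le[OF fD])
        then show False using x yn by simp
      qed
      ultimately show "x \<in> ?A" using un by blast
    qed
    then show "\<exists>m<n. ?A = {1..m}" using yn by (intro exI[of _ "?y - 1"]) auto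
  next
    assume "\<exists>m<n. ?A = {1..m}"
    then obtain m where m: "m < n" "?A = {1..m}" by blast
    then have D: "?D = {1..n} - {1..m}" using un dj by blast
    show "cutat P a" unfolding cutat_def
    proof (intro ballI)
      fix x y assume "x \<in> ?A" "y \<in> ?D"
      then have "x \<le> m" "\<not> y \<le> m" using m D by auto
      then show "x < y" by simp
    qed
  qed
qed

lemma reduced_iff: "reduced n P \<longleftrightarrow> P \<in> Comp n \<and> cuts P = {}"
proof -
  have "(\<exists>a m. 1 \<le> a \<and> a < length P \<and> m < n \<and> uni (take a P) = {1..m}) \<longleftrightarrow> cuts P \<noteq> {}"
    if "P \<in> Comp n"
    using cut_Comp[OF that] unfolding cuts_def
    by (auto simp: Suc_le_eq)
  then show ?thesis unfolding reduced_def by blast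
qed

lemma Gens_iff: "g \<in> Gens \<longleftrightarrow> g \<noteq> [] \<and> (\<exists>n. g \<in> Comp n) \<and> cuts g = {}"
  unfolding Gens_def reduced_iff by blast

lemma cut_Comp_split:
  assumes "R \<in> Comp N" "a < length R" "cutat R a"
  shows "uni (take a R) = {1..card (uni (take a R))}"
    "uni (drop a R) = {card (uni (take a R)) + 1..N}"
proof -
  obtain m where m: "m < N" "uni (take a R) = {1..m}" using cut_Comp[OF assms(1,2)] assms(3) by blast
  then show "uni (take a R) = {1..card (uni (take a R))}" by simp
  have un: "uni (take a R) \<union> uni (drop a R) = {1..N}" by (rule Comp_un[OF assms(1)])
  have dj: "uni (take a R) \<inter> uni (drop a R) = {}" by (rule Comp_dj[OF assms(1)])
  have "uni (drop a R) = {1..N} - {1..m}" using un dj m by blast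
  also have "\<dots> = {m + 1..N}" by auto
  finally show "uni (drop a R) = {card (uni (take a R)) + 1..N}" using m by simp
qed

fun goodw :: "nat set list list \<Rightarrow> nat set list \<Rightarrow> bool" where
  "goodw [] R \<longleftrightarrow> R = []"
| "goodw (g # w) R \<longleftrightarrow> good g (std (drop (length g) R)) R \<and> goodw w (std (drop (length g) R))"

fun conc :: "nat set list list \<Rightarrow> nat set list" where
  "conc [] = []"
| "conc (g # w) = g @ shift (card (uni g)) (conc w)"

definition nu :: "nat set list \<Rightarrow> nat" where
  "nu R = (if R = [] then 0 else Suc (card (cuts R)))"

lemma wprod_Cons: "wprod (g # w) = sprod (basis g) (wprod w)"
  unfolding wprod_def by simp

lemma wprod_Nil: "wprod [] = sunit"
  unfolding wprod_def by simp

lemma wprod_Tmod: "(\<forall>g\<in>set w. \<exists>n. g \<in> Comp n) \<Longrightarrow> wprod w \<in> Tmod"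
proof (induction w)
  case Nil
  then show ?case using wprod_Nil sunit_Tmod by simp
next
  case (Cons g w)
  then obtain n where "g \<in> Comp n" by auto
  then show ?case using Cons sprod_Tmod basis_Tmod wprod_Cons by simp
qed

lemma goodw_Comp: "goodw w R \<Longrightarrow> \<exists>N. R \<in> Comp N"
  by (cases w) (use Comp0 in \<open>auto dest: good_Comp\<close>)

lemma wprod_goodw:
  assumes "\<forall>g\<in>set w. \<exists>n. g \<in> Comp n"
  shows "wprod w R = (if goodw w R then 1 else 0)"
  using assms
proof (induction w arbitrary: R)
  case Nil
  then show ?case by (simp add: wprod_Nil sunit_def basis_def)
next
  case (Cons g w)
  obtain n where g: "g \<in> Comp n" using Cons.prems by auto
  have ws: "\<forall>g\<in>set w. \<exists>n. g \<in> Comp n" using Cons.prems by simp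
  let ?h = "wprod w"
  have hT: "?h \<in> Tmod" using wprod_Tmod[OF ws] .
  let ?R0 = "std (drop (length g) R)"
  have "wprod (g # w) R = (\<Sum>Q\<in>supp ?h. ?h Q * shp g Q R)"
    unfolding wprod_Cons sprod_def supp_basis by (simp add: basis_def)
  also have "\<dots> = (if goodw (g # w) R then 1 else 0)"
  proof (rule sum_single[OF Tmod_D(1)[OF hT], where Rz = ?R0])
    fix Q assume Q: "Q \<in> supp ?h"
    then obtain q where Qc: "Q \<in> Comp q" using Tmod_D(2)[OF hT] by blast
    have e: "?h Q * shp g Q R = (if goodw w Q \<and> good g Q R then 1 else 0)"
      using Cons.IH[OF ws, of Q] shp_good[OF g Qc, of R] by simp
    have q: "good g Q R \<Longrightarrow> Q = ?R0" unfolding good_def by simp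
    show "?h Q * shp g Q R = (if Q = ?R0 then (if goodw (g # w) R then 1 else 0) else 0)"
    proof (cases "Q = ?R0")
      case True
      have "goodw (g # w) R \<longleftrightarrow> goodw w Q \<and> good g Q R" unfolding goodw.simps True by blast
      then show ?thesis using e True by simp
    next
      case False
      then have "\<not> good g Q R" using q by blast
      then show ?thesis using e False by simp
    qed
  next
    assume "(if goodw (g # w) R then 1 else 0) \<noteq> (0::int)"
    then have "goodw w ?R0" by (auto split: if_splits)
    then show "?R0 \<in> supp ?h" using Cons.IH[OF ws, of ?R0] by (simp add: supp_def)
  qed
  finally show ?case .
qed

lemma Gens_Comp: "g \<in> Gens \<Longrightarrow> \<exists>n. g \<in> Comp n"
  using Gens_iff by blast

lemma goodw_len: "goodw w R \<Longrightarrow> length R = sum_list (map length w)"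
proof (induction w arbitrary: R)
  case Nil then show ?case by simp
next
  case (Cons g w)
  have p: "good g (std (drop (length g) R)) R" "goodw w (std (drop (length g) R))"
    using Cons.prems by simp_all
  have a: "length R = length g + length (std (drop (length g) R))" using p(1) unfolding good_def by blast
  have "length (std (drop (length g) R)) = sum_list (map length w)" using Cons.IH[OF p(2)] .
  then show ?case using a by (simp only: list.map sum_list.Cons)
qed

lemma Comp_pos: "X \<in> Comp n \<Longrightarrow> x \<in> uni X \<Longrightarrow> 1 \<le> x"
  using Comp_uni by fastforce

lemma conc_Comp:
  assumes "\<forall>g\<in>set w. \<exists>n. g \<in> Comp n"
  shows "conc w \<in> Comp (sum_list (map (\<lambda>g. card (uni g)) w))"
  using assms
proof (induction w)
  case Nil then show ?case by (simp add: Comp0)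
next
  case (Cons g w)
  obtain n where g: "g \<in> Comp n" using Cons.prems by auto
  have cn: "card (uni g) = n" using Comp_card[OF g] .
  let ?N = "sum_list (map (\<lambda>g. card (uni g)) w)"
  have c: "conc w \<in> Comp ?N" using Cons by simp
  have us: "uni (shift n (conc w)) = {n+1..n+?N}"
    unfolding uni_shift Comp_uni[OF c] by (simp add: image_add_atLeastAtMost)
  have ss: "sc (shift n (conc w))" unfolding shift_def
    by (rule sc_map[OF _ Comp_sc[OF c]]) (simp add: inj_on_def)
  have "sc (g @ shift n (conc w))" unfolding sc_append using Comp_sc[OF g] ss us Comp_uni[OF g] by auto
  moreover have "uni (g @ shift n (conc w)) = {1..n+?N}" using us Comp_uni[OF g] by auto
  ultimately show ?case using cn Comp_iff by simp
qed

lemma length_shift[simp]: "length (shift m X) = length X"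
  by (simp add: shift_def)

lemma goodw_conc:
  assumes "\<forall>g\<in>set w. \<exists>n. g \<in> Comp n"
  shows "goodw w (conc w)"
  using assms
proof (induction w)
  case Nil then show ?case by simp
next
  case (Cons g w)
  obtain n where g: "g \<in> Comp n" using Cons.prems by auto
  have ws: "\<forall>g\<in>set w. \<exists>n. g \<in> Comp n" using Cons.prems by simp
  have c: "conc w \<in> Comp (sum_list (map (\<lambda>g. card (uni g)) w))" using conc_Comp[OF ws] .
  have c2: "conc (g # w) \<in> Comp (sum_list (map (\<lambda>g. card (uni g)) (g # w)))" using conc_Comp[OF Cons.prems] .
  have d: "std (drop (length g) (conc (g # w))) = conc w"
    using std_shift[OF Comp_finite[OF c]] Comp_std[OF c] by simp
  have t: "take (length g) (conc (g # w)) = g" by simp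
  have "good g (conc w) (conc (g # w))" unfolding good_def
    using c2 t d Comp_std[OF g] by auto
  then show ?case using d Cons.IH[OF ws] by simp
qed

lemma std_eq_Nil[simp]: "std X = [] \<longleftrightarrow> X = []"
  using length_std[of X] by (metis length_0_conv)

lemma Gens_D:
  assumes "g \<in> Gens"
  obtains n where "g \<noteq> []" "g \<in> Comp n" "cuts g = {}"
  using assms Gens_iff by blast

lemma cuts_sub_len: "a \<in> cuts X \<Longrightarrow> 0 < a \<and> a < length X"
  unfolding cuts_def by simp

lemma goodw_nu:
  assumes "\<forall>g\<in>set w. g \<in> Gens" "goodw w R"
  shows "nu R \<le> length w \<and> (nu R = length w \<longrightarrow> R = conc w)"
  using assms
proof (induction w arbitrary: R)
  case Nil
  then show ?case by (simp add: nu_def)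
next
  case (Cons g v)
  have gG: "g \<in> Gens" and vG: "\<forall>g\<in>set v. g \<in> Gens" using Cons.prems(1) by auto
  obtain n where gne: "g \<noteq> []" and gC: "g \<in> Comp n" and gcut: "cuts g = {}" using Gens_D[OF gG] by blast
  let ?Y' = "std (drop (length g) R)"
  let ?X = "take (length g) R" let ?Y = "drop (length g) R"
  have gd: "good g ?Y' R" and gw: "goodw v ?Y'" using Cons.prems(2) by simp_all
  obtain N where RC: "R \<in> Comp N" and lR: "length R = length g + length ?Y'" and sX: "std ?X = g"
    using gd unfolding good_def by blast
  have IH: "nu ?Y' \<le> length v \<and> (nu ?Y' = length v \<longrightarrow> ?Y' = conc v)" using Cons.IH[OF vG gw] .
  have lX: "length ?X = length g" using lR by simp
  have fX: "finite (uni ?X)" using Comp_finite_take[OF RC] .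
  have fY: "finite (uni ?Y)" using Comp_finite_drop[OF RC] .
  have cX: "cuts ?X = {}" using cuts_std[OF fX] sX gcut by simp
  have cY: "cuts ?Y = cuts ?Y'" using cuts_std[OF fY] by simp
  have cR: "cuts R \<subseteq> insert (length g) ((\<lambda>b. length g + b) ` cuts ?Y')"
    using cuts_append_sub[of ?X ?Y] cX cY lX by simp
  have Rne: "R \<noteq> []" using lR gne by auto
  have nuR: "nu R = Suc (card (cuts R))" using Rne by (simp add: nu_def)
  show ?case
  proof (cases "v = []")
    case True
    have Y'0: "?Y' = []" using gw True by simp
    have lR2: "length R = length g" using lR unfolding Y'0 by simp
    have "cuts R = {}"
    proof -
      have c0: "cuts [] = {}" by (simp add: cuts_def)
      have "cuts R \<subseteq> {length g}" using cR unfolding Y'0 c0 by simp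
      moreover have "length g \<notin> cuts R" using cuts_sub_len[of "length g" R] lR2 by auto
      ultimately show ?thesis by blast
    qed
    then have "nu R = 1" using nuR by simp
    moreover have "R = g"
    proof -
      have "take (length g) R = R" using lR2 by simp
      then have "std R = g" using sX by simp
      then show "R = g" using Comp_std[OF RC] by simp
    qed
    ultimately show ?thesis using True by (simp add: shift_def)
  next
    case False
    have "length ?Y' = sum_list (map length v)" using goodw_len[OF gw] .
    moreover obtain g' v' where "v = g' # v'" using False by (cases v) auto
    moreover have "g' \<noteq> []" using vG \<open>v = g' # v'\<close> Gens_iff by auto
    ultimately have Y'ne: "?Y' \<noteq> []" by auto
    then have nuY: "nu ?Y' = Suc (card (cuts ?Y'))" by (simp add: nu_def)
    have cc: "card (cuts R) \<le> Suc (card (cuts ?Y'))"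
    proof -
      have "card (cuts R) \<le> card (insert (length g) ((\<lambda>b. length g + b) ` cuts ?Y'))"
        by (rule card_mono[OF _ cR]) simp
      also have "\<dots> \<le> Suc (card ((\<lambda>b. length g + b) ` cuts ?Y'))" by (rule card_insert_le_m1) simp_all
      also have "\<dots> \<le> Suc (card (cuts ?Y'))" using card_image_le[of "cuts ?Y'"] by simp
      finally show ?thesis .
    qed
    have le: "nu R \<le> length (g # v)" using nuR nuY IH cc by simp
    moreover have "R = conc (g # v)" if eq: "nu R = length (g # v)"
    proof -
      have inc: "length g \<in> cuts R"
      proof (rule ccontr)
        assume "length g \<notin> cuts R"
        then have "cuts R \<subseteq> (\<lambda>b. length g + b) ` cuts ?Y'" using cR by blast
        then have "card (cuts R) \<le> card ((\<lambda>b. length g + b) ` cuts ?Y')" by (rule card_mono[rotated]) simp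
        also have "\<dots> \<le> card (cuts ?Y')" by (rule card_image_le) simp
        finally have "card (cuts R) \<le> card (cuts ?Y')" .
        then show False using eq nuR nuY IH by simp
      qed
      have "nu ?Y' = length v" using eq nuR nuY IH cc by simp
      then have Yc: "?Y' = conc v" using IH by simp
      have lt: "length g < length R" and ct: "cutat R (length g)" using inc unfolding cuts_def by auto
      note sp = cut_Comp_split[OF RC lt ct]
      have cnX: "card (uni ?X) = card (uni g)" using card_uni_std[OF fX] sX by simp
      have Xg: "?X = g" using std_id[OF sp(1)] sX by simp
      have mN: "card (uni ?X) \<le> N" using Comp_split_card[OF RC, of "length g"] by simp
      have "uni ?Y = {card (uni ?X) + 1..card (uni ?X) + (N - card (uni ?X))}" using sp(2) mN by simp
      then have "?Y = shift (card (uni ?X)) ?Y'" by (rule shift_std)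
      then have "?Y = shift (card (uni g)) (conc v)" using Yc cnX by simp
      then have "R = g @ shift (card (uni g)) (conc v)" using Xg append_take_drop_id[of "length g" R] by simp
      then show ?thesis by simp
    qed
    ultimately show ?thesis by blast
  qed
qed

lemma Gens_all_Comp: "\<forall>g\<in>set w. g \<in> Gens \<Longrightarrow> \<forall>g\<in>set w. \<exists>n. g \<in> Comp n"
  using Gens_Comp by blast

lemma conc_ne: "g \<in> Gens \<Longrightarrow> conc (g # v) \<noteq> []"
  using Gens_iff by auto

lemma conc_sep:
  assumes "g \<in> Comp n" "Z \<in> Comp k"
  shows "\<forall>x\<in>uni g. \<forall>y\<in>uni (shift (card (uni g)) Z). x < y"
proof (intro ballI)
  fix x y assume x: "x \<in> uni g" and y: "y \<in> uni (shift (card (uni g)) Z)"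
  have "x \<le> n" using x Comp_uni[OF assms(1)] by auto
  moreover obtain z where "z \<in> uni Z" "y = n + z" using y Comp_card[OF assms(1)] unfolding uni_shift by auto
  moreover have "1 \<le> z" using Comp_pos[OF assms(2) \<open>z \<in> uni Z\<close>] .
  ultimately show "x < y" by simp
qed

lemma conc_cuts:
  assumes gG: "g \<in> Gens" and vG: "\<forall>g\<in>set v. g \<in> Gens" and vne: "v \<noteq> []"
  shows "insert (length g) ((\<lambda>b. length g + b) ` cuts (conc v)) \<subseteq> cuts (conc (g # v))"
    "\<forall>a\<in>cuts (conc (g # v)). length g \<le> a"
proof -
  obtain n where gne: "g \<noteq> []" and gC: "g \<in> Comp n" and gcut: "cuts g = {}" using Gens_D[OF gG] by blast
  obtain k where cv: "conc v \<in> Comp k" using conc_Comp[OF Gens_all_Comp[OF vG]] by blast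
  have cvne: "conc v \<noteq> []" using vne conc_ne vG by (cases v) auto
  let ?Z = "shift (card (uni g)) (conc v)"
  have sep: "\<forall>x\<in>uni g. \<forall>y\<in>uni ?Z. x < y" by (rule conc_sep[OF gC cv])
  have lc: "length (conc (g # v)) = length g + length (conc v)" by simp
  have "length g \<in> cuts (conc (g # v))"
    unfolding cuts_def using cut_append_at[OF sep] gne cvne by simp
  moreover have "length g + b \<in> cuts (conc (g # v))" if b: "b \<in> cuts (conc v)" for b
  proof -
    have "b \<in> cuts ?Z" using b cuts_shift by simp
    then have "0 < b" "b < length ?Z" "cutat ?Z b" unfolding cuts_def by auto
    then show ?thesis unfolding cuts_def using cut_append_shift[OF sep] by simp
  qed
  ultimately show "insert (length g) ((\<lambda>b. length g + b) ` cuts (conc v)) \<subseteq> cuts (conc (g # v))" by blast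
  show "\<forall>a\<in>cuts (conc (g # v)). length g \<le> a"
    using cuts_append_sub[of g ?Z] gcut by auto
qed

lemma nu_conc:
  assumes "\<forall>g\<in>set w. g \<in> Gens"
  shows "nu (conc w) = length w"
proof -
  have "length w \<le> nu (conc w)"
    using assms
  proof (induction w)
    case Nil then show ?case by simp
  next
    case (Cons g v)
    have gG: "g \<in> Gens" and vG: "\<forall>g\<in>set v. g \<in> Gens" using Cons.prems by auto
    have ne: "conc (g # v) \<noteq> []" using conc_ne[OF gG] .
    show ?case
    proof (cases "v = []")
      case True then show ?thesis using ne by (simp add: nu_def)
    next
      case False
      have cvne: "conc v \<noteq> []" using False conc_ne vG by (cases v) auto
      have "card (insert (length g) ((\<lambda>b. length g + b) ` cuts (conc v))) \<le> card (cuts (conc (g # v)))"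
        by (rule card_mono[OF _ conc_cuts(1)[OF gG vG False]]) simp
      moreover have "card (insert (length g) ((\<lambda>b. length g + b) ` cuts (conc v))) = Suc (card (cuts (conc v)))"
      proof -
        have "length g \<notin> (\<lambda>b. length g + b) ` cuts (conc v)" using cuts_sub_len by fastforce
        moreover have "card ((\<lambda>b. length g + b) ` cuts (conc v)) = card (cuts (conc v))"
          by (rule card_image) (simp add: inj_on_def)
        ultimately show ?thesis by simp
      qed
      ultimately show ?thesis using Cons.IH[OF vG] ne cvne by (simp add: nu_def)
    qed
  qed
  moreover have "nu (conc w) \<le> length w"
    using goodw_nu[OF assms goodw_conc[OF Gens_all_Comp[OF assms]]] by simp
  ultimately show ?thesis by simp
qed

lemma shift_inj: "shift m X = shift m Y \<Longrightarrow> X = Y"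
proof -
  have "inj (image ((+) m) :: nat set \<Rightarrow> nat set)"
    by (rule injI) (simp add: inj_image_eq_iff)
  then show "shift m X = shift m Y \<Longrightarrow> X = Y" unfolding shift_def by simp
qed

lemma conc_inj:
  assumes "\<forall>g\<in>set w. g \<in> Gens" "\<forall>g\<in>set w'. g \<in> Gens" "conc w = conc w'"
  shows "w = w'"
  using assms
proof (induction w arbitrary: w')
  case Nil
  then show ?case using conc_ne by (cases w') auto
next
  case (Cons g v)
  have gG: "g \<in> Gens" and vG: "\<forall>g\<in>set v. g \<in> Gens" using Cons.prems by auto
  obtain g' v' where w': "w' = g' # v'" using Cons.prems(3) conc_ne[OF gG] by (cases w') auto
  have gG': "g' \<in> Gens" and vG': "\<forall>g\<in>set v'. g \<in> Gens" using Cons.prems w' by auto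
  have eq: "conc (g # v) = conc (g' # v')" using Cons.prems w' by simp
  have c1: "cuts (conc [g]) = {}" using Gens_iff gG by (simp add: shift_def)
  have c2: "cuts (conc [g']) = {}" using Gens_iff gG' by (simp add: shift_def)
  have lg: "length g = length g'"
  proof (cases "v = []")
    case True
    show ?thesis
    proof (cases "v' = []")
      case True
      then show ?thesis using eq \<open>v = []\<close> by (simp add: shift_def)
    next
      case False
      then show ?thesis using conc_cuts(1)[OF gG' vG' False] eq c1 True by auto
    qed
  next
    case False
    show ?thesis
    proof (cases "v' = []")
      case True
      then show ?thesis using conc_cuts(1)[OF gG vG False] eq c2 by auto
    next
      case F2: False
      have "length g \<le> length g'" using conc_cuts[OF gG vG False] conc_cuts(1)[OF gG' vG' F2] eq by auto
      moreover have "length g' \<le> length g" using conc_cuts[OF gG' vG' F2] conc_cuts(1)[OF gG vG False] eq by auto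
      ultimately show ?thesis by simp
    qed
  qed
  have gg: "g = g'" using eq lg by (metis append_eq_append_conv conc.simps(2))
  then have "shift (card (uni g)) (conc v) = shift (card (uni g)) (conc v')" using eq by simp
  then have "conc v = conc v'" by (rule shift_inj)
  then have "v = v'" using Cons.IH[OF vG vG'] by simp
  then show ?case using gg w' by simp
qed

lemma cut_take_trans:
  assumes "b \<le> a" "cutat (take a R) b" "cutat R a"
  shows "cutat R b"
  unfolding cutat_def
proof (intro ballI)
  fix x y assume x: "x \<in> uni (take b R)" and y: "y \<in> uni (drop b R)"
  have d: "drop b R = drop b (take a R) @ drop a R"
  proof -
    have "drop b (take a R) = take (a - b) (drop b R)" by (rule drop_take)
    moreover have "drop a R = drop (a - b) (drop b R)" using assms(1) by simp
    ultimately show ?thesis by (simp only: append_take_drop_id)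
  qed
  have tb: "take b (take a R) = take b R" using assms(1) by (simp add: min_def)
  show "x < y"
  proof (cases "y \<in> uni (drop b (take a R))")
    case True
    have "x \<in> uni (take b (take a R))" using x unfolding tb .
    then show ?thesis using assms(2) True unfolding cutat_def by blast
  next
    case False
    have "y \<in> uni (drop b (take a R) @ drop a R)" using y unfolding d .
    then have "y \<in> uni (drop a R)" using False by (simp only: set_append Union_Un_distrib Un_iff) simp
    moreover have "x \<in> uni (take a R)" using x uni_take_sub[of b "take a R"] unfolding tb by blast
    ultimately show ?thesis using assms(3) unfolding cutat_def by blast
  qed
qed

lemma conc_surj: "R \<in> Comp n \<Longrightarrow> \<exists>w. (\<forall>g\<in>set w. g \<in> Gens) \<and> conc w = R"
proof (induction "length R" arbitrary: R n rule: less_induct)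
  case less
  show ?case
  proof (cases "R = []")
    case True
    then show ?thesis by (intro exI[of _ "[]"]) simp
  next
    case Rne: False
    show ?thesis
    proof (cases "cuts R = {}")
      case True
      then have "R \<in> Gens" using Gens_iff less.prems Rne by blast
      then show ?thesis by (intro exI[of _ "[R]"]) (simp add: shift_def)
    next
      case False
      define a where "a = Min (cuts R)"
      have aC: "a \<in> cuts R" using Min_in[OF cuts_finite False] a_def by simp
      have amin: "\<forall>b\<in>cuts R. a \<le> b" using Min_le[OF cuts_finite] a_def by simp
      have a0: "0 < a" "a < length R" "cutat R a" using aC unfolding cuts_def by auto
      let ?X = "take a R" let ?Y = "drop a R"
      note sp = cut_Comp_split[OF less.prems a0(2) a0(3)]
      let ?m = "card (uni ?X)"
      have XC: "?X \<in> Comp ?m" unfolding Comp_iff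
        using sc_take_drop(1)[OF Comp_sc[OF less.prems]] sp(1) by simp
      have Xne: "?X \<noteq> []" using a0 Rne by simp
      have Xcut: "cuts ?X = {}"
      proof (rule ccontr)
        assume "cuts ?X \<noteq> {}"
        then obtain b where b: "b \<in> cuts ?X" by blast
        then have b0: "0 < b" "b < length ?X" "cutat ?X b" unfolding cuts_def by auto
        have ba: "b < a" using b0(2) a0(2) by simp
        have "cutat R b" using cut_take_trans[of b a R] b0(3) ba a0(3) by simp
        then have "b \<in> cuts R" using b0(1) ba a0(2) unfolding cuts_def by simp
        then show False using amin ba by fastforce
      qed
      have XG: "?X \<in> Gens" using Gens_iff XC Xne Xcut by blast
      have YC: "std ?Y \<in> Comp (card (uni ?Y))" using Comp_take_std(2)[OF less.prems] .
      have lY: "length (std ?Y) < length R" using a0 by simp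
      obtain v where vG: "\<forall>g\<in>set v. g \<in> Gens" and cv: "conc v = std ?Y"
        using less.hyps[OF lY YC] by blast
      have mN: "?m \<le> n" using Comp_split_card[OF less.prems, of a] by simp
      have "uni ?Y = {?m + 1..?m + (n - ?m)}" using sp(2) mN by simp
      then have "?Y = shift ?m (std ?Y)" by (rule shift_std)
      then have "R = ?X @ shift ?m (conc v)" using cv append_take_drop_id[of a R] by simp
      then have "conc (?X # v) = R" by simp
      then show ?thesis using XG vG by (intro exI[of _ "?X # v"]) simp
    qed
  qed
qed

lemma Words_D: "c \<in> Words \<Longrightarrow> finite (supp c)" "c \<in> Words \<Longrightarrow> w \<in> supp c \<Longrightarrow> \<forall>g\<in>set w. g \<in> Gens"
  unfolding Words_def supp_def mem_Collect_eq by (blast, blast)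

lemma Words_D3: "c \<in> Words \<Longrightarrow> c w \<noteq> 0 \<Longrightarrow> set w \<subseteq> Gens"
  unfolding Words_def mem_Collect_eq by blast

lemma Words_I: "finite (supp c) \<Longrightarrow> (\<And>w. c w \<noteq> 0 \<Longrightarrow> set w \<subseteq> Gens) \<Longrightarrow> c \<in> Words"
  unfolding Words_def mem_Collect_eq by blast

lemma Tmod_D3: "f \<in> Tmod \<Longrightarrow> f P \<noteq> 0 \<Longrightarrow> \<exists>n. P \<in> Comp n"
  unfolding Tmod_def mem_Collect_eq by blast

lemma Tmod_I: "finite (supp f) \<Longrightarrow> (\<And>P. f P \<noteq> 0 \<Longrightarrow> \<exists>n. P \<in> Comp n) \<Longrightarrow> f \<in> Tmod"
  unfolding Tmod_def mem_Collect_eq by blast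

lemma Phi_alt:
  assumes "finite W" "supp c \<subseteq> W"
  shows "Phi c R = (\<Sum>w\<in>W. c w * wprod w R)"
  unfolding Phi_def by (rule sum.mono_neutral_left[OF assms]) (auto simp: supp_def)

lemma supp_add: "supp (\<lambda>x. f x + g x) \<subseteq> supp f \<union> supp g"
  unfolding supp_def by auto

lemma supp_smul: "supp (\<lambda>x. k * f x) \<subseteq> supp f"
  unfolding supp_def by auto

lemma Words_add: "c1 \<in> Words \<Longrightarrow> c2 \<in> Words \<Longrightarrow> (\<lambda>w. c1 w + c2 w) \<in> Words"
proof -
  assume a: "c1 \<in> Words" "c2 \<in> Words"
  have "finite (supp (\<lambda>w. c1 w + c2 w))"
    by (rule finite_subset[OF supp_add]) (simp add: Words_D(1)[OF a(1)] Words_D(1)[OF a(2)])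
  moreover have "set w \<subseteq> Gens" if "c1 w + c2 w \<noteq> 0" for w
  proof -
    have "c1 w \<noteq> 0 \<or> c2 w \<noteq> 0" using that by auto
    then show ?thesis using Words_D3 a by blast
  qed
  ultimately show ?thesis by (rule Words_I)
qed

lemma Words_smul: "c \<in> Words \<Longrightarrow> (\<lambda>w. k * c w) \<in> Words"
proof -
  assume a: "c \<in> Words"
  have "finite (supp (\<lambda>w. k * c w))"
    by (rule finite_subset[OF supp_smul]) (simp add: Words_D(1)[OF a])
  moreover have "set w \<subseteq> Gens" if "k * c w \<noteq> 0" for w
  proof -
    have "c w \<noteq> 0" using that by auto
    then show ?thesis using Words_D3 a by blast
  qed
  ultimately show ?thesis by (rule Words_I)
qed

lemma Phi_add:
  assumes "c1 \<in> Words" "c2 \<in> Words"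
  shows "Phi (\<lambda>w. c1 w + c2 w) = (\<lambda>R. Phi c1 R + Phi c2 R)"
proof
  fix R
  let ?W = "supp c1 \<union> supp c2"
  have f: "finite ?W" using Words_D(1)[OF assms(1)] Words_D(1)[OF assms(2)] by simp
  have "Phi (\<lambda>w. c1 w + c2 w) R = (\<Sum>w\<in>?W. (c1 w + c2 w) * wprod w R)"
    by (rule Phi_alt[OF f supp_add])
  also have "\<dots> = (\<Sum>w\<in>?W. c1 w * wprod w R) + (\<Sum>w\<in>?W. c2 w * wprod w R)"
    by (simp add: distrib_right sum.distrib)
  also have "\<dots> = Phi c1 R + Phi c2 R"
    using Phi_alt[OF f, of c1 R] Phi_alt[OF f, of c2 R] by simp
  finally show "Phi (\<lambda>w. c1 w + c2 w) R = Phi c1 R + Phi c2 R" .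
qed

lemma Phi_smul:
  assumes "c \<in> Words"
  shows "Phi (\<lambda>w. k * c w) = (\<lambda>R. k * Phi c R)"
proof
  fix R
  have f: "finite (supp c)" using Words_D(1)[OF assms] .
  have "Phi (\<lambda>w. k * c w) R = (\<Sum>w\<in>supp c. (k * c w) * wprod w R)"
    by (rule Phi_alt[OF f supp_smul])
  also have "\<dots> = k * Phi c R" unfolding Phi_def by (simp add: sum_distrib_left mult.assoc)
  finally show "Phi (\<lambda>w. k * c w) R = k * Phi c R" .
qed

definition wbasis :: "nat set list list \<Rightarrow> nat set list list \<Rightarrow> int" where
  "wbasis w = (\<lambda>w'. if w' = w then 1 else 0)"

lemma basis_Words: "\<forall>g\<in>set w. g \<in> Gens \<Longrightarrow> wbasis w \<in> Words"
  unfolding Words_def supp_def wbasis_def by auto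

lemma Phi_basis: "Phi (wbasis w) = wprod w"
proof -
  have "supp (wbasis w) = {w}" unfolding supp_def wbasis_def by auto
  then show ?thesis unfolding Phi_def by (simp add: wbasis_def)
qed

lemma Im_add: "f1 \<in> Phi ` Words \<Longrightarrow> f2 \<in> Phi ` Words \<Longrightarrow> (\<lambda>x. f1 x + f2 x) \<in> Phi ` Words"
proof -
  assume "f1 \<in> Phi ` Words" "f2 \<in> Phi ` Words"
  then obtain c1 c2 where c: "c1 \<in> Words" "c2 \<in> Words" "f1 = Phi c1" "f2 = Phi c2" by blast
  have "(\<lambda>x. f1 x + f2 x) = Phi (\<lambda>w. c1 w + c2 w)" using Phi_add[OF c(1,2)] c(3,4) by simp
  then show ?thesis using Words_add[OF c(1,2)] by (rule image_eqI)
qed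

lemma Im_smul: "f \<in> Phi ` Words \<Longrightarrow> (\<lambda>x. k * f x) \<in> Phi ` Words"
proof -
  assume "f \<in> Phi ` Words"
  then obtain c where c: "c \<in> Words" "f = Phi c" by blast
  have "(\<lambda>x. k * f x) = Phi (\<lambda>w. k * c w)" using Phi_smul[OF c(1)] c(2) by simp
  then show ?thesis using Words_smul[OF c(1)] by (rule image_eqI)
qed

lemma Im_zero: "(\<lambda>x. 0) \<in> Phi ` Words"
proof -
  have "(\<lambda>w. 0) \<in> Words" unfolding Words_def supp_def by simp
  moreover have "Phi (\<lambda>w. 0) = (\<lambda>x. 0)" unfolding Phi_def supp_def by simp
  ultimately show ?thesis by (metis image_eqI)
qed

lemma Im_lincomb:
  assumes "finite F" "\<forall>R\<in>F. basis R \<in> Phi ` Words"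
  shows "(\<lambda>x. \<Sum>R\<in>F. a R * basis R x) \<in> Phi ` Words"
  using assms
proof (induction F rule: finite_induct)
  case empty
  then show ?case using Im_zero by simp
next
  case (insert R F)
  have "(\<lambda>x. \<Sum>R\<in>insert R F. a R * basis R x) = (\<lambda>x. a R * basis R x + (\<Sum>R\<in>F. a R * basis R x))"
    using insert.hyps by (simp add: sum.insert)
  moreover have "(\<lambda>x. a R * basis R x) \<in> Phi ` Words" using Im_smul insert.prems by simp
  moreover have "(\<lambda>x. \<Sum>R\<in>F. a R * basis R x) \<in> Phi ` Words" using insert by simp
  ultimately show ?case using Im_add by simp
qed

lemma basis_Im: "R \<in> Comp n \<Longrightarrow> basis R \<in> Phi ` Words"
proof (induction "nu R" arbitrary: R n rule: less_induct)
  case less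
  obtain w where wG: "\<forall>g\<in>set w. g \<in> Gens" and cw: "conc w = R" using conc_surj[OF less.prems] by blast
  have nuR: "nu R = length w" using nu_conc[OF wG] cw by simp
  let ?h = "wprod w"
  have hv: "\<And>x. ?h x = (if goodw w x then 1 else 0)" using wprod_goodw[OF Gens_all_Comp[OF wG]] .
  have hT: "?h \<in> Tmod" using wprod_Tmod[OF Gens_all_Comp[OF wG]] .
  have gR: "goodw w R" using goodw_conc[OF Gens_all_Comp[OF wG]] cw by simp
  let ?F = "supp ?h - {R}"
  have fF: "finite ?F" using Tmod_D(1)[OF hT] by simp
  have Fin: "basis R' \<in> Phi ` Words" if R': "R' \<in> ?F" for R'
  proof -
    have g': "goodw w R'" using R' hv unfolding supp_def by (auto split: if_splits)
    have "R' \<noteq> R" using R' by simp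
    then have "nu R' < nu R" using goodw_nu[OF wG g'] cw nuR by fastforce
    moreover obtain N where "R' \<in> Comp N" using goodw_Comp[OF g'] by blast
    ultimately show ?thesis using less.hyps by blast
  qed
  have hIm: "?h \<in> Phi ` Words" using Phi_basis[symmetric] basis_Words[OF wG] by (rule image_eqI)
  have sIm: "(\<lambda>x. \<Sum>R'\<in>?F. (-1) * basis R' x) \<in> Phi ` Words"
  proof -
    have "\<forall>R'\<in>?F. basis R' \<in> Phi ` Words" using Fin by blast
    from Im_lincomb[OF fF this, of "\<lambda>_. -1"] show ?thesis by simp
  qed
  have eq: "basis R = (\<lambda>x. ?h x + (\<Sum>R'\<in>?F. (-1) * basis R' x))"
  proof
    fix x
    have s: "(\<Sum>R'\<in>?F. (-1) * basis R' x) = (if x \<in> ?F then -1 else 0)"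
    proof -
      have "(\<Sum>R'\<in>?F. (-1) * basis R' x) = (\<Sum>R'\<in>?F. if x = R' then -1 else 0)"
        by (rule sum.cong) (auto simp: basis_def)
      also have "\<dots> = (if x \<in> ?F then -1 else 0)" using fF by (simp only: sum.delta')
      finally show ?thesis .
    qed
    show "basis R x = ?h x + (\<Sum>R'\<in>?F. (-1) * basis R' x)"
    proof (cases "x = R")
      case True
      then show ?thesis using s hv gR by (simp add: basis_def)
    next
      case False
      have "x \<in> supp ?h \<longleftrightarrow> goodw w x" using hv unfolding supp_def by simp
      then show ?thesis using s hv False by (simp add: basis_def)
    qed
  qed
  show ?case unfolding eq using Im_add[OF hIm sIm] .
qed

lemma Tmod_add: "f \<in> Tmod \<Longrightarrow> g \<in> Tmod \<Longrightarrow> (\<lambda>x. f x + g x) \<in> Tmod"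
proof -
  assume a: "f \<in> Tmod" "g \<in> Tmod"
  have "finite (supp (\<lambda>x. f x + g x))"
    by (rule finite_subset[OF supp_add]) (simp add: Tmod_D(1)[OF a(1)] Tmod_D(1)[OF a(2)])
  moreover have "\<exists>n. P \<in> Comp n" if "f P + g P \<noteq> 0" for P
  proof -
    have "f P \<noteq> 0 \<or> g P \<noteq> 0" using that by auto
    then show ?thesis using Tmod_D3 a by blast
  qed
  ultimately show ?thesis by (rule Tmod_I)
qed

lemma Tmod_smul: "f \<in> Tmod \<Longrightarrow> (\<lambda>x. k * f x) \<in> Tmod"
proof -
  assume a: "f \<in> Tmod"
  have "finite (supp (\<lambda>x. k * f x))"
    by (rule finite_subset[OF supp_smul]) (simp add: Tmod_D(1)[OF a])
  moreover have "\<exists>n. P \<in> Comp n" if "k * f P \<noteq> 0" for P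
  proof -
    have "f P \<noteq> 0" using that by auto
    then show ?thesis using Tmod_D3 a by blast
  qed
  ultimately show ?thesis by (rule Tmod_I)
qed

lemma Tmod_lincomb:
  assumes "finite W" "\<forall>w\<in>W. h w \<in> Tmod"
  shows "(\<lambda>R. \<Sum>w\<in>W. a w * h w R) \<in> Tmod"
  using assms
proof (induction W rule: finite_induct)
  case empty
  then show ?case unfolding Tmod_def supp_def by simp
next
  case (insert w W)
  have "(\<lambda>R. \<Sum>w\<in>insert w W. a w * h w R) = (\<lambda>R. a w * h w R + (\<Sum>w\<in>W. a w * h w R))"
    using insert.hyps by (simp add: sum.insert)
  moreover have "(\<lambda>R. a w * h w R) \<in> Tmod" using Tmod_smul insert.prems by simp
  moreover have "(\<lambda>R. \<Sum>w\<in>W. a w * h w R) \<in> Tmod" using insert by simp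
  ultimately show ?case using Tmod_add by simp
qed

lemma Phi_Tmod: "c \<in> Words \<Longrightarrow> Phi c \<in> Tmod"
proof -
  assume c: "c \<in> Words"
  have e: "Phi c = (\<lambda>R. \<Sum>w\<in>supp c. c w * wprod w R)" unfolding Phi_def ..
  have "\<forall>w\<in>supp c. wprod w \<in> Tmod"
  proof
    fix w assume "w \<in> supp c"
    show "wprod w \<in> Tmod" by (rule wprod_Tmod[OF Gens_all_Comp[OF Words_D(2)[OF c \<open>w \<in> supp c\<close>]]])
  qed
  from Tmod_lincomb[OF Words_D(1)[OF c] this, of c] show ?thesis unfolding e .
qed

lemma Tmod_Im: "f \<in> Tmod \<Longrightarrow> f \<in> Phi ` Words"
proof -
  assume f: "f \<in> Tmod"
  have e: "f = (\<lambda>x. \<Sum>R\<in>supp f. f R * basis R x)"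
  proof
    fix x
    have "(\<Sum>R\<in>supp f. f R * basis R x) = (\<Sum>R\<in>supp f. if R = x then f x else 0)"
      by (rule sum.cong) (auto simp: basis_def)
    also have "\<dots> = f x" using Tmod_D(1)[OF f] by (simp add: supp_def)
    finally show "f x = (\<Sum>R\<in>supp f. f R * basis R x)" by simp
  qed
  have "\<forall>R\<in>supp f. basis R \<in> Phi ` Words"
  proof
    fix R assume "R \<in> supp f"
    then obtain n where "R \<in> Comp n" using Tmod_D(2)[OF f] by blast
    then show "basis R \<in> Phi ` Words" by (rule basis_Im)
  qed
  from Im_lincomb[OF Tmod_D(1)[OF f] this, of f] show ?thesis by (subst e)
qed

lemma Phi_zero:
  assumes d: "d \<in> Words" and z: "Phi d = (\<lambda>R. 0)"
  shows "d = (\<lambda>w. 0)"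
proof (rule ccontr)
  assume "d \<noteq> (\<lambda>w. 0)"
  then have ne: "supp d \<noteq> {}" unfolding supp_def by auto
  have fW: "finite (supp d)" using Words_D(1)[OF d] .
  let ?k = "Max (length ` supp d)"
  have "?k \<in> length ` supp d" using fW ne by simp
  then obtain w where wW: "w \<in> supp d" and lw: "length w = ?k" by auto
  have kmax: "length w' \<le> ?k" if "w' \<in> supp d" for w' using fW that by simp
  have wG: "\<forall>g\<in>set w. g \<in> Gens" using Words_D(2)[OF d wW] .
  let ?R = "conc w"
  have "Phi d ?R = (\<Sum>w'\<in>supp d. d w' * wprod w' ?R)" unfolding Phi_def ..
  also have "\<dots> = d w"
  proof (rule sum_single[OF fW, where Rz = w])
    fix w' assume w': "w' \<in> supp d"
    have w'G: "\<forall>g\<in>set w'. g \<in> Gens" using Words_D(2)[OF d w'] .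
    show "d w' * wprod w' ?R = (if w' = w then d w else 0)"
    proof (cases "w' = w")
      case True
      then show ?thesis using wprod_goodw[OF Gens_all_Comp[OF wG]] goodw_conc[OF Gens_all_Comp[OF wG]] by simp
    next
      case False
      have "\<not> goodw w' ?R"
      proof
        assume g: "goodw w' ?R"
        have "nu ?R = length w" using nu_conc[OF wG] .
        then have "nu ?R = length w'" using goodw_nu[OF w'G g] kmax[OF w'] lw by simp
        then have "?R = conc w'" using goodw_nu[OF w'G g] by simp
        then have "w = w'" using conc_inj[OF wG w'G] by simp
        then show False using False by simp
      qed
      then show ?thesis using wprod_goodw[OF Gens_all_Comp[OF w'G]] False by simp
    qed
  next
    show "w \<in> supp d" using wW .
  qed
  finally have "Phi d ?R = d w" .
  moreover have "d w \<noteq> 0" using wW unfolding supp_def by simp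
  ultimately show False using z by (metis)
qed

lemma Phi_inj: "inj_on Phi Words"
proof (rule inj_onI)
  fix c1 c2 assume c1: "c1 \<in> Words" and c2: "c2 \<in> Words" and e: "Phi c1 = Phi c2"
  let ?d = "\<lambda>w. c1 w + (-1) * c2 w"
  have dW: "?d \<in> Words" using Words_add[OF c1 Words_smul[OF c2]] .
  have "Phi ?d = (\<lambda>R. Phi c1 R + Phi (\<lambda>w. (-1) * c2 w) R)" using Phi_add[OF c1 Words_smul[OF c2]] .
  also have "\<dots> = (\<lambda>R. 0)" using Phi_smul[OF c2, of "-1"] e by simp
  finally have d0: "?d = (\<lambda>w. 0)" using Phi_zero[OF dW] by simp
  show "c1 = c2"
  proof
    fix w
    have "c1 w + (-1) * c2 w = 0" using fun_cong[OF d0, of w] by simp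
    then show "c1 w = c2 w" by simp
  qed
qed


theorem theorem3p4:
  shows "sunit \<in> Tmod
    \<and> (\<forall>f\<in>Tmod. \<forall>g\<in>Tmod. sprod f g \<in> Tmod)
    \<and> (\<forall>f\<in>Tmod. sprod sunit f = f \<and> sprod f sunit = f)
    \<and> (\<forall>f\<in>Tmod. \<forall>g\<in>Tmod. \<forall>h\<in>Tmod. sprod (sprod f g) h = sprod f (sprod g h))
    \<and> bij_betw Phi Words Tmod"
proof (intro conjI ballI)
  show "sunit \<in> Tmod" by (rule sunit_Tmod)
next
  fix f g assume "f \<in> Tmod" "g \<in> Tmod"
  then show "sprod f g \<in> Tmod" by (rule sprod_Tmod)
next
  fix f assume "f \<in> Tmod"
  then show "sprod sunit f = f" by (rule sprod_unit_left)
next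
  fix f assume "f \<in> Tmod"
  then show "sprod f sunit = f" by (rule sprod_unit_right)
next
  fix f g h assume "f \<in> Tmod" "g \<in> Tmod" "h \<in> Tmod"
  then show "sprod (sprod f g) h = sprod f (sprod g h)" by (rule sprod_assoc)
next
  have "Phi ` Words \<subseteq> Tmod" using Phi_Tmod by blast
  moreover have "Tmod \<subseteq> Phi ` Words" using Tmod_Im by blast
  ultimately have "Phi ` Words = Tmod" by (rule antisym)
  then show "bij_betw Phi Words Tmod" unfolding bij_betw_def using Phi_inj by blast
qed

end
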